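(* Consider the system $x(k+1)=Ax(k)+Bu(k)$ with $A\in\mathbb{R}^{n\times n}$, $B\in\mathbb{R}^{n\times m}$ and $(A,B)$ controllable. Let $\{u_i^{[0,T_i-1]},x_i^{[0,T_i-1]}\}_{i=1}^p$ be $p$ input-state trajectories of this system (i.e. $x_i(k+1)=Ax_i(k)+Bu_i(k)$). Let $L\ge1$ and let $\alpha_1,\dots,\alpha_p$ be any nonzero real weights (used in all matrices below). 1) If $T_1=\dots=T_p=T_0$ and $\{u_i^{[0,T_0-1]}\}_{i=1}^p$ are CCPE of order $L+n$, then $\operatorname{rank}\begin{bmatrix}H_1^{cum}(\{x_i^{[0,T_0-L]}\}_{i=1}^p)\\ H_L^{cum}(\{u_i^{[0,T_0-1]}\}_{i=1}^p)\end{bmatrix}=n+mL$. 2) If $\{u_i^{[0,T_i-1]}\}_{i=1}^p$ are MCPE of order $L+n$, then $\operatorname{rank}\begin{bmatrix}H_1^{mos}(\{x_i^{[0,T_i-L]}\}_{i=1}^p)\\ H_L^{mos}(\{u_i^{[0,T_i-1]}\}_{i=1}^p)\end{bmatrix}=n+mL$. 3) If $T_1=\dots=T_{\bar p}=T_0$ and $\{u_i^{[0,T_i-1]}\}_{i=1}^p$ are HCPE of order $L+n$ (cumulative part $u_1,\dots,u_{\bar p}$, mosaic part $u_{\bar p+1},\dots,u_p$), then $\operatorname{rank}\begin{bmatrix}H_1^{hyb}(\{x_i^{[0,T_i-L]}\}_{i=1}^p)\\ H_L^{hyb}(\{u_i^{[0,T_i-1]}\}_{i=1}^p)\end{bmat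rix}=n+mL$.
   Context: For a sequence $z^{[a,b]}=(z(a),\dots,z(b))$ with $z(k)\in\mathbb{R}^q$ and $L\le b-a+1$, the block Hankel matrix $H_L(z^{[a,b]})\in\mathbb{R}^{qL\times(b-a-L+2)}$ has $(r,c)$ block entry $z(a+r+c)$. With nonzero weights $\alpha_i$: $H_L^{mos}(\{z_i^{[a,b_i]}\}_{i=1}^p)=[\alpha_1H_L(z_1^{[a,b_1]})\ \cdots\ \alpha_pH_L(z_p^{[a,b_p]})]$; for equal-length sequences $H_L^{cum}(\{z_i^{[a,b]}\}_{i=1}^p)=\sum_i\alpha_iH_L(z_i^{[a,b]})$; and $H_L^{hyb}(\{z_i\}_{i=1}^p)=[H_L^{cum}(\{z_i\}_{i=1}^{\bar p})\ \ H_L^{mos}(\{z_i\}_{i=\bar p+1}^p)]$ where $z_1,\dots,z_{\bar p}$ have equal lengths. Signals $u_i\in\mathbb{R}^m$ are MCPE (resp. CCPE, HCPE) of order $K$ if $H_K^{mos}$ (resp. $H_K^{cum}$, $H_K^{hyb}$) of the sequences has full row rank $mK$ for every choice of nonzero weights $\alpha_i$. *)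

theory Defs
  imports "Jordan_Normal_Form.DL_Rank"
begin

definition mrank :: "real mat \<Rightarrow> nat" where
  "mrank M = vec_space.rank (dim_row M) M"

fun hcat :: "nat \<Rightarrow> real mat list \<Rightarrow> real mat" where
  "hcat r [] = 0\<^sub>m r 0"
| "hcat r (M # Ms) =
     (let N = hcat r Ms in
      mat r (dim_col M + dim_col N)
        (\<lambda>(i, j). if j < dim_col M then M $$ (i, j) else N $$ (i, j - dim_col M)))"

(* Block Hankel matrix H_L(z^{[a,b]}) in R^{qL x (b-a-L+2)}, z(k) in R^q,
   whose (r,c) block entry is z(a+r+c). *)
definition hankel :: "nat \<Rightarrow> nat \<Rightarrow> (nat \<Rightarrow> real vec) \<Rightarrow> nat \<Rightarrow> nat \<Rightarrow> real mat" where
  "hankel q L z a b = mat (q * L) (b + 2 - a - L) (\<lambda>(r, c). z (a + r div q + c) $ (r mod q))"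

definition hankel_mos :: "nat \<Rightarrow> nat \<Rightarrow> (nat \<Rightarrow> nat \<Rightarrow> real vec) \<Rightarrow> nat \<Rightarrow> (nat \<Rightarrow> nat)
    \<Rightarrow> (nat \<Rightarrow> real) \<Rightarrow> nat \<Rightarrow> nat \<Rightarrow> real mat" where
  "hankel_mos q L z a b \<alpha> lo hi =
     hcat (q * L) (map (\<lambda>i. \<alpha> i \<cdot>\<^sub>m hankel q L (z i) a (b i)) [lo..<Suc hi])"

definition hankel_cum :: "nat \<Rightarrow> nat \<Rightarrow> (nat \<Rightarrow> nat \<Rightarrow> real vec) \<Rightarrow> nat \<Rightarrow> nat
    \<Rightarrow> (nat \<Rightarrow> real) \<Rightarrow> nat \<Rightarrow> nat \<Rightarrow> real mat" where
  "hankel_cum q L z a b \<alpha> lo hi =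
     mat (q * L) (b + 2 - a - L)
       (\<lambda>(r, c). \<Sum>i\<in>{lo..hi}. \<alpha> i * hankel q L (z i) a b $$ (r, c))"

(* Hybrid Hankel: [H^cum(z_1..z_pbar) H^mos(z_{pbar+1}..z_p)];
   b0 is the common end index of z_1..z_pbar, b i the end index of z_i for i > pbar. *)
definition hankel_hyb :: "nat \<Rightarrow> nat \<Rightarrow> (nat \<Rightarrow> nat \<Rightarrow> real vec) \<Rightarrow> nat \<Rightarrow> nat \<Rightarrow> (nat \<Rightarrow> nat)
    \<Rightarrow> (nat \<Rightarrow> real) \<Rightarrow> nat \<Rightarrow> nat \<Rightarrow> real mat" where
  "hankel_hyb q L z a b0 b \<alpha> pbar p =
     hcat (q * L) [hankel_cum q L z a b0 \<alpha> 1 pbar, hankel_mos q L z a b \<alpha> (Suc pbar) p]"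

(* Persistency of excitation notions for signals u_i^{[0,T_i-1]}, u_i(k) in R^m, i = 1..p.
   The length requirement K <= T_i is the well-definedness condition of the Hankel matrices. *)
definition MCPE :: "nat \<Rightarrow> nat \<Rightarrow> (nat \<Rightarrow> nat \<Rightarrow> real vec) \<Rightarrow> (nat \<Rightarrow> nat) \<Rightarrow> nat \<Rightarrow> bool" where
  "MCPE m K u T p \<longleftrightarrow> (\<forall>i\<in>{1..p}. K \<le> T i) \<and>
     (\<forall>\<alpha>. (\<forall>i\<in>{1..p}. \<alpha> i \<noteq> 0) \<longrightarrow>
        mrank (hankel_mos m K u 0 (\<lambda>i. T i - 1) \<alpha> 1 p) = m * K)"

definition CCPE :: "nat \<Rightarrow> nat \<Rightarrow> (nat \<Rightarrow> nat \<Rightarrow> real vec) \<Rightarrow> nat \<Rightarrow> nat \<Rightarrow> bool" where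
  "CCPE m K u T0 p \<longleftrightarrow> K \<le> T0 \<and>
     (\<forall>\<alpha>. (\<forall>i\<in>{1..p}. \<alpha> i \<noteq> 0) \<longrightarrow>
        mrank (hankel_cum m K u 0 (T0 - 1) \<alpha> 1 p) = m * K)"

(* cumulative part u_1..u_pbar of common length T0, mosaic part u_{pbar+1}..u_p of lengths T i *)
definition HCPE :: "nat \<Rightarrow> nat \<Rightarrow> (nat \<Rightarrow> nat \<Rightarrow> real vec) \<Rightarrow> nat \<Rightarrow> (nat \<Rightarrow> nat)
    \<Rightarrow> nat \<Rightarrow> nat \<Rightarrow> bool" where
  "HCPE m K u T0 T pbar p \<longleftrightarrow> K \<le> T0 \<and> (\<forall>i\<in>{Suc pbar..p}. K \<le> T i) \<and>
     (\<forall>\<alpha>. (\<forall>i\<in>{1..p}. \<alpha> i \<noteq> 0) \<longrightarrow>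
        mrank (hankel_hyb m K u 0 (T0 - 1) (\<lambda>i. T i - 1) \<alpha> pbar p) = m * K)"

definition controllable :: "nat \<Rightarrow> real mat \<Rightarrow> real mat \<Rightarrow> bool" where
  "controllable n A B \<longleftrightarrow> mrank (hcat n (map (\<lambda>k. (A ^\<^sub>m k) * B) [0..<n])) = n"

end

theory Submission
  imports Defs
begin


lemma (in vec_space) mult_in_span:
  assumes A: "A \<in> carrier_mat n nc" and w: "w \<in> carrier_vec nc"
  shows "A *\<^sub>v w \<in> span (set (cols A))"
proof -
  have cs: "set (cols A) \<subseteq> carrier_vec n" using A cols_dim by blast
  have "A *\<^sub>v w = lincomb_list (\<lambda>i. w $ i) (cols A)"
  proof (subst lincomb_list_as_mat_mult)
    show "\<forall>wa\<in>set (cols A). dim_vec wa = n" using cs by auto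
    have "vec (length (cols A)) (($) w) = w" using A w by auto
    thus "A *\<^sub>v w = mat_of_cols n (cols A) *\<^sub>v vec (length (cols A)) (($) w)" using A mat_of_cols_cols[of A] by auto
  qed
  also have "\<dots> \<in> span_list (cols A)" by (rule in_span_listI, auto)
  finally show ?thesis using span_list_as_span[OF cs] by simp
qed

lemma (in vec_space) full_rank_span:
  assumes A: "A \<in> carrier_mat n nc" and r: "rank A = n"
  shows "span (set (cols A)) = carrier_vec n"
proof -
  have cs: "set (cols A) \<subseteq> carrier_vec n" using A cols_dim by blast
  obtain S where S: "maximal S (\<lambda>T. T \<subseteq> set (cols A) \<and> lin_indpt T)"
    using maximal_exists[of "(\<lambda>T. T \<subseteq> set (cols A) \<and> lin_indpt T)" "card (set (cols A))" "{}"]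
    by (meson List.finite_set card_mono empty_iff empty_subsetI finite_lin_indpt2 rev_finite_subset)
  have c: "card S = n" using rank_card_indpt[OF A S] r by simp
  have SA: "S \<subseteq> set (cols A)" "lin_indpt S" using S unfolding maximal_def by auto
  have fS: "finite S" using SA(1) finite_subset by blast
  have "basis S" by (rule dim_li_is_basis, insert fS SA cs c dim_is_n, auto)
  hence "span S = carrier_vec n" unfolding basis_def by auto
  moreover have "span S \<subseteq> span (set (cols A))" using SA(1) span_is_monotone by metis
  moreover have "span (set (cols A)) \<subseteq> carrier_vec n" using cs span_closed by auto
  ultimately show ?thesis by auto
qed

lemma (in vec_space) orth_span_self:
  assumes W: "W \<subseteq> carrier_vec n" and v: "v \<in> span W" and orth: "\<And>w. w \<in> W \<Longrightarrow> v \<bullet> w = 0"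
  shows "(\<Sum>i<n. v $ i * v $ i) = 0"
proof -
  obtain a X where X: "v = lincomb a X" "finite X" "X \<subseteq> W" using in_spanE[OF v] by blast
  have XC: "X \<subseteq> carrier_vec n" using X W by auto
  have vc: "v \<in> carrier_vec n" using X XC lincomb_closed by auto
  have "v \<bullet> v = (\<Sum>i<n. v $ i * (\<Sum>x\<in>X. a x * x $ i))"
    unfolding scalar_prod_def using vc X(1) lincomb_index[OF _ XC] 
    by (auto simp: lessThan_atLeast0 intro!: sum.cong)
  also have "\<dots> = (\<Sum>x\<in>X. a x * (\<Sum>i<n. v $ i * x $ i))"
    by (simp add: sum_distrib_left sum_distrib_right mult.assoc mult.left_commute sum.swap[of _ "{..<n}"])
  also have "\<dots> = 0"
  proof (rule sum.neutral, intro ballI)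
    fix x assume "x \<in> X"
    hence "v \<bullet> x = 0" "x \<in> carrier_vec n" using orth X XC by auto
    thus "a x * (\<Sum>i<n. v $ i * x $ i) = 0" unfolding scalar_prod_def by (simp add: lessThan_atLeast0)
  qed
  finally show ?thesis unfolding scalar_prod_def using vc by (simp add: lessThan_atLeast0)
qed

lemma orth_zero:
  fixes v :: "real vec"
  assumes vc: "v \<in> carrier_vec n" and vv: "(\<Sum>i<n. v $ i * v $ i) = 0"
  shows "v = 0\<^sub>v n"
proof -
  have "\<forall>i\<in>{..<n}. v $ i * v $ i = 0"
    using sum_nonneg_eq_0_iff[of "{..<n}" "\<lambda>i. v $ i * v $ i"] vv by auto
  thus ?thesis using vc by (intro eq_vecI, auto)
qed




lemma F2:
  fixes M :: "real mat"
  assumes M: "M \<in> carrier_mat r c" and rk: "mrank M = r" and v: "v \<in> carrier_vec r"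
    and lk: "\<forall>j<c. (\<Sum>i<r. v $ i * M $$ (i, j)) = 0"
  shows "v = 0\<^sub>v r"
proof -
  interpret vs: vec_space "TYPE(real)" r .
  have rk': "vs.rank M = r" using rk M unfolding mrank_def by auto
  have cs: "set (cols M) \<subseteq> carrier_vec r" using M cols_dim by blast
  have sp: "vs.span (set (cols M)) = carrier_vec r" by (rule vs.full_rank_span[OF M rk'])
  have "(\<Sum>i<r. v $ i * v $ i) = 0"
  proof (rule vs.orth_span_self[OF cs])
    show "v \<in> vs.span (set (cols M))" using sp v by auto
    fix w assume "w \<in> set (cols M)"
    then obtain j where j: "j < c" "w = col M j" using M by (auto simp: cols_def)
    show "v \<bullet> w = 0" using lk j M unfolding scalar_prod_def
      by (auto simp: lessThan_atLeast0 intro!: trans[OF _ lk[rule_format, OF j(1)]] sum.cong)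
  qed
  thus ?thesis using orth_zero[OF v] by auto
qed

lemma F1:
  fixes M :: "real mat"
  assumes M: "M \<in> carrier_mat r c"
    and lk: "\<forall>v\<in>carrier_vec r. (\<forall>j<c. (\<Sum>i<r. v $ i * M $$ (i, j)) = 0) \<longrightarrow> v = 0\<^sub>v r"
  shows "mrank M = r"
proof -
  interpret vs: vec_space "TYPE(real)" r .
  define G where "G = M * transpose_mat M"
  have G: "G \<in> carrier_mat r r" using M unfolding G_def by auto
  have ker: "v = 0\<^sub>v r" if v: "v \<in> carrier_vec r" and Gv: "G *\<^sub>v v = 0\<^sub>v r" for v
  proof -
    define y where "y = transpose_mat M *\<^sub>v v"
    have y: "y \<in> carrier_vec c" using M v unfolding y_def by auto
    have "y \<bullet> y = v \<bullet> (M *\<^sub>v y)" unfolding y_def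
      by (rule transpose_vec_mult_scalar[OF M _ v], insert M v, auto)
    also have "M *\<^sub>v y = G *\<^sub>v v" unfolding y_def G_def using M v by auto
    also have "v \<bullet> \<dots> = 0" using Gv v by simp
    finally have "(\<Sum>i<c. y $ i * y $ i) = 0" using y unfolding scalar_prod_def by (simp add: lessThan_atLeast0)
    hence y0: "y = 0\<^sub>v c" using orth_zero[OF y] by auto
    show ?thesis
    proof -
     have "\<forall>j<c. (\<Sum>i<r. v $ i * M $$ (i, j)) = 0"
     proof (intro allI impI)
      fix j assume j: "j < c"
      have "y $ j = 0" using y0 j by simp
      moreover have "y $ j = (\<Sum>i<r. v $ i * M $$ (i, j))"
        unfolding y_def using j M v by (auto simp: scalar_prod_def lessThan_atLeast0 mult.commute intro!: sum.cong)
      ultimately show "(\<Sum>i<r. v $ i * M $$ (i, j)) = 0" by simp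
     qed
     thus ?thesis using lk v by auto
    qed
  qed
  have "det G \<noteq> 0" using det_0_iff_vec_prod_zero_field[OF G] ker by auto
  hence rG: "vs.rank G = r" using vs.det_rank_iff[OF G] by auto
  have csM: "set (cols M) \<subseteq> carrier_vec r" using M cols_dim by blast
  have csG: "set (cols G) \<subseteq> carrier_vec r" using G cols_dim by blast
  have "set (cols G) \<subseteq> vs.span (set (cols M))"
  proof
    fix w assume "w \<in> set (cols G)"
    then obtain j where j: "j < r" "w = col G j" using G by (auto simp: cols_def)
    have "w = M *\<^sub>v col (transpose_mat M) j" unfolding j G_def using M j by (subst col_mult2, auto)
    thus "w \<in> vs.span (set (cols M))" by (rule ssubst, intro vs.mult_in_span[OF M], insert M j, auto)
  qed
  hence "vs.span (set (cols G)) \<subseteq> vs.span (set (cols M))"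
    using vs.span_subsetI[OF csM] by auto
  hence sp: "vs.span (set (cols M)) = carrier_vec r"
    using vs.full_rank_span[OF G rG] vs.span_closed[OF csM] by auto
  have "vs.rank M = vectorspace.dim class_ring (vs.V\<lparr>carrier := carrier_vec r\<rparr>)"
    unfolding vs.rank_def sp by simp
  also have "vs.V\<lparr>carrier := carrier_vec r\<rparr> = vs.V" by (simp add: module_vec_def)
  also have "vectorspace.dim class_ring vs.V = r" using vs.dim_is_n by simp
  finally show ?thesis unfolding mrank_def using M by auto
qed




lemma sum_shift_ivl: "(\<Sum>r\<in>{a..<a+m}. (h r :: real)) = (\<Sum>i<m. h (a + i :: nat))"
  by (rule sum.reindex_bij_witness[of _ "\<lambda>i. a + i" "\<lambda>r. r - a"]) auto

lemma blocksum: "(\<Sum>r<m*N. (h r :: real)) = (\<Sum>s<N. \<Sum>i<m. h (s*m+i :: nat))"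
proof (induction N)
  case 0 then show ?case by simp
next
  case (Suc N)
  have e: "{..<m * Suc N} = {..<m*N} \<union> {m*N..<m*N+m}" by auto
  have "(\<Sum>r<m*Suc N. h r) = (\<Sum>r<m*N. h r) + (\<Sum>r\<in>{m*N..<m*N+m}. h r)"
    unfolding e by (rule sum.union_disjoint, auto)
  also have "(\<Sum>r\<in>{m*N..<m*N+m}. h r) = (\<Sum>i<m. h (N*m+i))"
    by (simp add: sum_shift_ivl mult.commute)
  finally show ?case using Suc by simp
qed

lemma sum_if_lt: "(k::nat) \<le> N \<Longrightarrow> (\<Sum>s<N. if s < k then f s else 0) = (\<Sum>s<k. f s :: real)"
proof -
  assume "k \<le> N"
  have "(\<Sum>s<N. if s < k then f s else 0) = (\<Sum>s\<in>{x\<in>{..<N}. x < k}. f s)"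
    by (rule sum.inter_filter[symmetric], simp)
  also have "{x\<in>{..<N}. x < k} = {..<k}" using \<open>k \<le> N\<close> by auto
  finally show ?thesis .
qed

lemma sum_if_window: "(k::nat) + L \<le> N \<Longrightarrow>
  (\<Sum>s<N. if k \<le> s \<and> s < k + L then f s else 0) = (\<Sum>b<L. f (k + b) :: real)"
proof -
  assume kN: "k + L \<le> N"
  have "(\<Sum>s<N. if k \<le> s \<and> s < k + L then f s else 0) = (\<Sum>s\<in>{x\<in>{..<N}. k \<le> x \<and> x < k + L}. f s)"
    by (rule sum.inter_filter[symmetric], simp)
  also have "{x\<in>{..<N}. k \<le> x \<and> x < k + L} = {k..<k+L}" using kN by auto
  also have "(\<Sum>s\<in>{k..<k+L}. f s) = (\<Sum>b<L. f (k + b))"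
    by (rule sum_shift_ivl)
  finally show ?thesis .
qed

lemma sum_rearrange:
  fixes a :: "nat \<Rightarrow> real" and Qf eta U :: "nat \<Rightarrow> nat \<Rightarrow> real"
  assumes dN: "d + L \<le> N"
  shows "(\<Sum>s<N. \<Sum>i<m. (\<Sum>k\<le>d. a k * ((if s < k then Qf (k-1-s) i else 0)
            + (if k \<le> s \<and> s < k + L then eta (s-k) i else 0))) * U s i)
       = (\<Sum>k\<le>d. a k * ((\<Sum>s<k. \<Sum>i<m. Qf (k-1-s) i * U s i) + (\<Sum>b<L. \<Sum>i<m. eta b i * U (k+b) i)))"
proof -
  define F where "F k s i = a k * ((if s < k then Qf (k-1-s) i else 0)
            + (if k \<le> s \<and> s < k + L then eta (s-k) i else 0)) * U s i" for k s i
  have "(\<Sum>s<N. \<Sum>i<m. (\<Sum>k\<le>d. a k * ((if s < k then Qf (k-1-s) i else 0)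
            + (if k \<le> s \<and> s < k + L then eta (s-k) i else 0))) * U s i)
       = (\<Sum>s<N. \<Sum>i<m. \<Sum>k\<le>d. F k s i)"
    unfolding F_def by (simp only: sum_distrib_right)
  also have "\<dots> = (\<Sum>s<N. \<Sum>k\<le>d. \<Sum>i<m. F k s i)"
    by (rule sum.cong[OF refl], rule sum.swap)
  also have "\<dots> = (\<Sum>k\<le>d. \<Sum>s<N. \<Sum>i<m. F k s i)"
    by (rule sum.swap)
  also have "\<dots> = (\<Sum>k\<le>d. a k * ((\<Sum>s<k. \<Sum>i<m. Qf (k-1-s) i * U s i) + (\<Sum>b<L. \<Sum>i<m. eta b i * U (k+b) i)))"
  proof (rule sum.cong[OF refl])
    fix k assume "k \<in> {..d}"
    hence k: "k \<le> N" "k + L \<le> N" using dN by auto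
    have "(\<Sum>s<N. \<Sum>i<m. F k s i) = a k * ((\<Sum>s<N. if s < k then (\<Sum>i<m. Qf (k-1-s) i * U s i) else 0)
          + (\<Sum>s<N. if k \<le> s \<and> s < k + L then (\<Sum>i<m. eta (s-k) i * U s i) else 0))"
    proof -
      have "(\<Sum>s<N. \<Sum>i<m. F k s i) = (\<Sum>s<N. a k * ((if s < k then (\<Sum>i<m. Qf (k-1-s) i * U s i) else 0)
          + (if k \<le> s \<and> s < k + L then (\<Sum>i<m. eta (s-k) i * U s i) else 0)))"
      proof (rule sum.cong[OF refl])
        fix s
        show "(\<Sum>i<m. F k s i) = a k * ((if s < k then (\<Sum>i<m. Qf (k-1-s) i * U s i) else 0)
          + (if k \<le> s \<and> s < k + L then (\<Sum>i<m. eta (s-k) i * U s i) else 0))"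
          unfolding F_def
          by (cases "s < k"; cases "k \<le> s \<and> s < k + L")
             (simp_all add: sum_distrib_left sum.distrib ring_distribs mult.assoc)
      qed
      thus ?thesis by (simp add: sum_distrib_left sum.distrib ring_distribs)
    qed
    also have "\<dots> = a k * ((\<Sum>s<k. \<Sum>i<m. Qf (k-1-s) i * U s i) + (\<Sum>b<L. \<Sum>i<m. eta b i * U (k+b) i))"
      by (simp only: sum_if_lt[OF k(1)] sum_if_window[OF k(2)] diff_add_inverse)
    finally show "(\<Sum>s<N. \<Sum>i<m. F k s i) = a k * ((\<Sum>s<k. \<Sum>i<m. Qf (k-1-s) i * U s i) + (\<Sum>b<L. \<Sum>i<m. eta b i * U (k+b) i))" .
  qed
  finally show ?thesis .
qed




lemma pow_mat_add: assumes A: "A \<in> carrier_mat n n"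
  shows "A ^\<^sub>m (i + j) = A ^\<^sub>m i * A ^\<^sub>m j"
proof (induction j)
  case 0 then show ?case using A by simp
next
  case (Suc j)
  have "A ^\<^sub>m (i + Suc j) = (A ^\<^sub>m i * A ^\<^sub>m j) * A" using Suc by simp
  also have "\<dots> = A ^\<^sub>m i * (A ^\<^sub>m j * A)" using A by (intro assoc_mult_mat, auto)
  finally show ?case by simp
qed

lemma expand:
  fixes A B :: "real mat" and x u :: "nat \<Rightarrow> real vec"
  assumes A: "A \<in> carrier_mat n n" and B: "B \<in> carrier_mat n m" and xi: "xi \<in> carrier_vec n"
    and dims: "\<forall>k<T. x k \<in> carrier_vec n \<and> u k \<in> carrier_vec m"
    and dyn: "\<forall>k. k + 1 < T \<longrightarrow> x (k + 1) = A *\<^sub>v x k + B *\<^sub>v u k"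
  shows "c + k < T \<Longrightarrow> xi \<bullet> (A ^\<^sub>m j *\<^sub>v x (c + k)) =
     xi \<bullet> (A ^\<^sub>m (j + k) *\<^sub>v x c) + (\<Sum>s<k. xi \<bullet> (A ^\<^sub>m (j + k - 1 - s) *\<^sub>v (B *\<^sub>v u (c + s))))"
proof (induction k arbitrary: j)
  case 0 then show ?case by simp
next
  case (Suc k)
  have xk: "x (c + k) \<in> carrier_vec n" "u (c + k) \<in> carrier_vec m" using dims Suc.prems by auto
  have e: "x (c + Suc k) = A *\<^sub>v x (c + k) + B *\<^sub>v u (c + k)"
    using dyn Suc.prems by (metis add_Suc_right Suc_eq_plus1)
  have Aj: "A ^\<^sub>m j \<in> carrier_mat n n" using A by simp
  have "xi \<bullet> (A ^\<^sub>m j *\<^sub>v x (c + Suc k)) = xi \<bullet> (A ^\<^sub>m j *\<^sub>v (A *\<^sub>v x (c + k))) + xi \<bullet> (A ^\<^sub>m j *\<^sub>v (B *\<^sub>v u (c + k)))"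
  proof -
    have "A ^\<^sub>m j *\<^sub>v (A *\<^sub>v x (c + k) + B *\<^sub>v u (c + k)) = A ^\<^sub>m j *\<^sub>v (A *\<^sub>v x (c + k)) + A ^\<^sub>m j *\<^sub>v (B *\<^sub>v u (c + k))"
      by (rule mult_add_distrib_mat_vec[OF Aj], insert A B xk, auto)
    moreover have "xi \<bullet> (A ^\<^sub>m j *\<^sub>v (A *\<^sub>v x (c + k)) + A ^\<^sub>m j *\<^sub>v (B *\<^sub>v u (c + k))) =
       xi \<bullet> (A ^\<^sub>m j *\<^sub>v (A *\<^sub>v x (c + k))) + xi \<bullet> (A ^\<^sub>m j *\<^sub>v (B *\<^sub>v u (c + k)))"
      by (rule scalar_prod_add_distrib[OF xi], insert A B xk Aj, (meson mult_mat_vec_carrier)+)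
    ultimately show ?thesis unfolding e by simp
  qed
  also have "A ^\<^sub>m j *\<^sub>v (A *\<^sub>v x (c + k)) = A ^\<^sub>m (Suc j) *\<^sub>v x (c + k)"
    using A xk by (simp add: assoc_mult_mat_vec[symmetric, OF Aj A])
  also have "xi \<bullet> (A ^\<^sub>m (Suc j) *\<^sub>v x (c + k)) = xi \<bullet> (A ^\<^sub>m (Suc j + k) *\<^sub>v x c) +
      (\<Sum>s<k. xi \<bullet> (A ^\<^sub>m (Suc j + k - 1 - s) *\<^sub>v (B *\<^sub>v u (c + s))))"
    by (rule Suc.IH) (use Suc.prems in simp)
  finally show ?case
    by (simp add: Suc_diff_le algebra_simps)
qed

lemma Qlemma:
  fixes A B :: "real mat"
  assumes A: "A \<in> carrier_mat n n" and B: "B \<in> carrier_mat n m" and xi: "xi \<in> carrier_vec n"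
    and y: "y \<in> carrier_vec m"
  shows "xi \<bullet> (A ^\<^sub>m l *\<^sub>v (B *\<^sub>v y)) = (\<Sum>i<m. xi \<bullet> (A ^\<^sub>m l *\<^sub>v col B i) * y $ i)"
proof -
  have Al: "A ^\<^sub>m l \<in> carrier_mat n n" using A by simp
  have M: "A ^\<^sub>m l * B \<in> carrier_mat n m" using Al B by simp
  have "xi \<bullet> (A ^\<^sub>m l *\<^sub>v (B *\<^sub>v y)) = xi \<bullet> ((A ^\<^sub>m l * B) *\<^sub>v y)"
    using Al B y by simp
  also have "\<dots> = (transpose_mat (A ^\<^sub>m l * B) *\<^sub>v xi) \<bullet> y"
    by (rule transpose_vec_mult_scalar[OF M y xi, symmetric])
  also have "\<dots> = (\<Sum>i<m. (transpose_mat (A ^\<^sub>m l * B) *\<^sub>v xi) $ i * y $ i)"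
    using y M by (simp add: scalar_prod_def lessThan_atLeast0)
  also have "\<dots> = (\<Sum>i<m. xi \<bullet> (A ^\<^sub>m l *\<^sub>v col B i) * y $ i)"
  proof (rule sum.cong[OF refl])
    fix i assume i: "i \<in> {..<m}"
    have "(transpose_mat (A ^\<^sub>m l * B) *\<^sub>v xi) $ i = col (A ^\<^sub>m l * B) i \<bullet> xi"
    proof -
      have dc: "dim_col (A ^\<^sub>m l * B) = m" using M by auto
      show ?thesis using i dc by (simp add: row_transpose)
    qed
    also have "col (A ^\<^sub>m l * B) i = A ^\<^sub>m l *\<^sub>v col B i" using i by (intro col_mult2[OF Al B]) simp
    also have "(A ^\<^sub>m l *\<^sub>v col B i) \<bullet> xi = xi \<bullet> (A ^\<^sub>m l *\<^sub>v col B i)"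
      by (rule comm_scalar_prod[of _ n], insert Al B i xi, auto)
    finally show "(transpose_mat (A ^\<^sub>m l * B) *\<^sub>v xi) $ i * y $ i = xi \<bullet> (A ^\<^sub>m l *\<^sub>v col B i) * y $ i" by simp
  qed
  finally show ?thesis .
qed

lemma lin_dep_np1:
  fixes f :: "nat \<Rightarrow> real vec"
  assumes f: "\<forall>k\<le>n. f k \<in> carrier_vec n"
  shows "\<exists>a. (\<exists>k\<le>n. a k \<noteq> 0) \<and> (\<forall>i<n. (\<Sum>k\<le>n. a k * f k $ i) = 0)"
proof -
  define P where "P = mat\<^sub>r (Suc n) (Suc n) (\<lambda>i. if i = n then 0\<^sub>v (Suc n) else vec (Suc n) (\<lambda>k. f k $ i))"
  have P: "P \<in> carrier_mat (Suc n) (Suc n)" unfolding P_def by simp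
  have "det P = 0" unfolding P_def by (rule det_row_0, simp, simp)
  then obtain v where v: "v \<in> carrier_vec (Suc n)" "v \<noteq> 0\<^sub>v (Suc n)" "P *\<^sub>v v = 0\<^sub>v (Suc n)"
    using det_0_iff_vec_prod_zero_field[OF P] by auto
  have "\<not> (\<forall>k<Suc n. v $ k = 0)"
  proof
    assume "\<forall>k<Suc n. v $ k = 0"
    hence "v = 0\<^sub>v (Suc n)" using v(1) by (intro eq_vecI, auto)
    thus False using v(2) by simp
  qed
  then obtain k where k: "k < Suc n" "v $ k \<noteq> 0" by blast
  show ?thesis
  proof (intro exI[of _ "\<lambda>k. v $ k"] conjI)
    show "\<exists>k\<le>n. v $ k \<noteq> 0" using k less_Suc_eq_le by blast
    show "\<forall>i<n. (\<Sum>k\<le>n. v $ k * f k $ i) = 0"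
    proof (intro allI impI)
      fix i assume i: "i < n"
      have "(P *\<^sub>v v) $ i = 0" using v(3) i by simp
      moreover have "(P *\<^sub>v v) $ i = (\<Sum>k<Suc n. f k $ i * v $ k)"
      proof -
        have "(P *\<^sub>v v) $ i = row P i \<bullet> v" using i P by (simp add: index_mult_mat_vec)
        also have "row P i = vec (Suc n) (\<lambda>k. f k $ i)" unfolding P_def using i by simp
        finally show ?thesis using v(1) by (simp add: scalar_prod_def lessThan_atLeast0)
      qed
      ultimately show "(\<Sum>k\<le>n. v $ k * f k $ i) = 0"
        by (simp add: lessThan_Suc_atMost mult.commute)
    qed
  qed
qed

lemma dependence:
  fixes A :: "real mat"
  assumes A: "A \<in> carrier_mat n n" and xi: "xi \<in> carrier_vec n"
  shows "\<exists>d a. d \<le> n \<and> a d \<noteq> (0::real) \<and>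
     (\<forall>z\<in>carrier_vec n. (\<Sum>k\<le>d. a k * (xi \<bullet> (A ^\<^sub>m k *\<^sub>v z))) = 0)"
proof -
  define f where "f k = transpose_mat (A ^\<^sub>m k) *\<^sub>v xi" for k
  have fc: "\<forall>k\<le>n. f k \<in> carrier_vec n" unfolding f_def
    using A xi by (meson mult_mat_vec_carrier pow_carrier_mat transpose_carrier_mat)
  obtain a where a: "\<exists>k\<le>n. a k \<noteq> 0" "\<forall>i<n. (\<Sum>k\<le>n. a k * f k $ i) = 0"
    using lin_dep_np1[OF fc] by blast
  have G: "xi \<bullet> (A ^\<^sub>m k *\<^sub>v z) = (\<Sum>i<n. f k $ i * z $ i)" if z: "(z :: real vec) \<in> carrier_vec n" for k z
  proof -
    have "xi \<bullet> (A ^\<^sub>m k *\<^sub>v z) = f k \<bullet> z" unfolding f_def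
      by (rule transpose_vec_mult_scalar[symmetric, of _ n n], insert A z xi, auto)
    thus ?thesis using z by (simp add: scalar_prod_def lessThan_atLeast0)
  qed
  have full: "(\<Sum>k\<le>n. a k * (xi \<bullet> (A ^\<^sub>m k *\<^sub>v z))) = 0" if z: "(z :: real vec) \<in> carrier_vec n" for z
  proof -
    have "(\<Sum>k\<le>n. a k * (xi \<bullet> (A ^\<^sub>m k *\<^sub>v z))) = (\<Sum>k\<le>n. \<Sum>i<n. a k * f k $ i * z $ i)"
      by (simp add: G[OF z] sum_distrib_left mult.assoc)
    also have "\<dots> = (\<Sum>i<n. (\<Sum>k\<le>n. a k * f k $ i) * z $ i)"
      by (subst sum.swap, simp add: sum_distrib_right)
    also have "\<dots> = 0" using a(2) by simp
    finally show ?thesis .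
  qed
  define D where "D = {k. k \<le> n \<and> a k \<noteq> 0}"
  have finD: "finite D" "D \<noteq> {}" using a(1) unfolding D_def by auto
  define d where "d = Max D"
  have dD: "d \<in> D" unfolding d_def using finD by simp
  have dmax: "a k = 0" if k: "k \<le> n" "d < k" for k
  proof (rule ccontr)
    assume "a k \<noteq> 0"
    hence "k \<in> D" using k unfolding D_def by auto
    hence "k \<le> d" unfolding d_def using Max_ge[OF finD(1)] by auto
    thus False using k by simp
  qed
  show ?thesis
  proof (intro exI[of _ d] exI[of _ a] conjI ballI)
    show "d \<le> n" "a d \<noteq> 0" using dD unfolding D_def by auto
    fix z :: "real vec" assume z: "z \<in> carrier_vec n"
    have "(\<Sum>k\<le>d. a k * (xi \<bullet> (A ^\<^sub>m k *\<^sub>v z))) = (\<Sum>k\<le>n. a k * (xi \<bullet> (A ^\<^sub>m k *\<^sub>v z)))"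
      by (rule sum.mono_neutral_left, insert \<open>d \<le> n\<close> dmax, auto)
    thus "(\<Sum>k\<le>d. a k * (xi \<bullet> (A ^\<^sub>m k *\<^sub>v z))) = 0" using full[OF z] by simp
  qed
qed




definition lkc :: "nat \<Rightarrow> real mat \<Rightarrow> real vec \<Rightarrow> bool" where
  "lkc r M v \<longleftrightarrow> (\<forall>j<dim_col M. (\<Sum>i<r. v $ i * M $$ (i, j)) = 0)"

lemma hcat_dims[simp]: "dim_row (hcat r Ms) = r" "dim_col (hcat r Ms) = sum_list (map dim_col Ms)"
  by (induction Ms) (auto simp: Let_def)

lemma lkc_hcat: "lkc r (hcat r Ms) v \<longleftrightarrow> (\<forall>M\<in>set Ms. lkc r M v)"
proof (induction Ms)
  case Nil then show ?case by (simp add: lkc_def)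
next
  case (Cons M Ms)
  let ?N = "hcat r Ms"
  have ent: "\<And>i j. i < r \<Longrightarrow> j < dim_col M + dim_col ?N \<Longrightarrow> hcat r (M # Ms) $$ (i, j) =
     (if j < dim_col M then M $$ (i, j) else ?N $$ (i, j - dim_col M))"
    by (simp add: Let_def)
  have "lkc r (hcat r (M # Ms)) v \<longleftrightarrow> lkc r M v \<and> lkc r ?N v"
  proof
    assume h: "lkc r (hcat r (M # Ms)) v"
    have dc: "dim_col (hcat r (M # Ms)) = dim_col M + dim_col ?N" by simp
    show "lkc r M v \<and> lkc r ?N v" unfolding lkc_def
    proof (intro conjI allI impI)
      fix j assume j: "j < dim_col M"
      have hj: "\<forall>j<dim_col M + dim_col ?N. (\<Sum>i<r. v $ i * hcat r (M # Ms) $$ (i, j)) = 0"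
        using h unfolding lkc_def dc .
      have "(\<Sum>i<r. v $ i * hcat r (M # Ms) $$ (i, j)) = 0" using hj[rule_format, of j] j by linarith
      moreover have "(\<Sum>i<r. v $ i * hcat r (M # Ms) $$ (i, j)) = (\<Sum>i<r. v $ i * M $$ (i, j))"
        by (rule sum.cong[OF refl], subst ent, insert j, auto simp del: hcat.simps)
      ultimately show "(\<Sum>i<r. v $ i * M $$ (i, j)) = 0" by simp
    next
      fix j assume j: "j < dim_col ?N"
      have hj: "\<forall>j<dim_col M + dim_col ?N. (\<Sum>i<r. v $ i * hcat r (M # Ms) $$ (i, j)) = 0"
        using h unfolding lkc_def dc .
      have "(\<Sum>i<r. v $ i * hcat r (M # Ms) $$ (i, j + dim_col M)) = 0" using hj[rule_format, of "j + dim_col M"] j by linarith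
      moreover have "(\<Sum>i<r. v $ i * hcat r (M # Ms) $$ (i, j + dim_col M)) = (\<Sum>i<r. v $ i * ?N $$ (i, j))"
        by (rule sum.cong[OF refl], subst ent, insert j, auto simp del: hcat.simps)
      ultimately show "(\<Sum>i<r. v $ i * ?N $$ (i, j)) = 0" by simp
    qed
  next
    assume h: "lkc r M v \<and> lkc r ?N v"
    show "lkc r (hcat r (M # Ms)) v" unfolding lkc_def
    proof (intro allI impI)
      fix j assume j: "j < dim_col (hcat r (M # Ms))"
      show "(\<Sum>i<r. v $ i * hcat r (M # Ms) $$ (i, j)) = 0"
      proof (cases "j < dim_col M")
        case True
        have "(\<Sum>i<r. v $ i * hcat r (M # Ms) $$ (i, j)) = (\<Sum>i<r. v $ i * M $$ (i, j))"
          by (rule sum.cong[OF refl], subst ent, insert j True, auto simp del: hcat.simps)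
        also have "\<dots> = 0" using h True unfolding lkc_def by auto
        finally show ?thesis .
      next
        case False
        have "(\<Sum>i<r. v $ i * hcat r (M # Ms) $$ (i, j)) = (\<Sum>i<r. v $ i * ?N $$ (i, j - dim_col M))"
          by (rule sum.cong[OF refl], subst ent, insert j False, auto simp del: hcat.simps)
        also have "\<dots> = 0" using h False j unfolding lkc_def by (auto simp del: hcat.simps)
        finally show ?thesis .
      qed
    qed
  qed
  thus ?case using Cons by simp
qed




lemma dm: "(i::nat) < m \<Longrightarrow> (b * m + i) div m = b \<and> (b * m + i) mod m = i"
  by auto

lemma idx_lt: "(s::nat) < N \<Longrightarrow> i < m \<Longrightarrow> s * m + i < m * N"
proof -
  assume "s < N" "i < m"
  hence "s * m + i < (s + 1) * m" by simp
  also have "\<dots> \<le> N * m" using \<open>s < N\<close> by (intro mult_le_mono1) simp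
  finally show ?thesis by (simp add: mult.commute)
qed

lemma core:
  fixes A B :: "real mat" and S :: "((nat \<Rightarrow> real vec) \<times> (nat \<Rightarrow> real vec) \<times> nat) set" and v :: "real vec"
  assumes A: "A \<in> carrier_mat n n" and B: "B \<in> carrier_mat n m"
    and ctrb: "controllable n A B" and L: "1 \<le> L"
    and traj: "\<forall>(x,u,T)\<in>S. (\<forall>k<T. x k \<in> carrier_vec n \<and> u k \<in> carrier_vec m) \<and>
                 (\<forall>k. k + 1 < T \<longrightarrow> x (k + 1) = A *\<^sub>v x k + B *\<^sub>v u k)"
    and PE: "\<forall>w\<in>carrier_vec (m*(L+n)). (\<forall>(x,u,T)\<in>S. \<forall>c. c + (L+n) \<le> T \<longrightarrow>
                (\<Sum>r<m*(L+n). w $ r * u (r div m + c) $ (r mod m)) = 0) \<longrightarrow> w = 0\<^sub>v (m*(L+n))"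
    and v: "v \<in> carrier_vec (n + m*L)"
    and K: "\<forall>(x,u,T)\<in>S. \<forall>c. c + L \<le> T \<longrightarrow>
              (\<Sum>r<n. v $ r * x c $ r) + (\<Sum>r<m*L. v $ (n + r) * u (r div m + c) $ (r mod m)) = 0"
  shows "v = 0\<^sub>v (n + m*L)"
proof -
  define xi where "xi = vec n (\<lambda>r. v $ r)"
  have xi: "xi \<in> carrier_vec n" by (simp add: xi_def)
  define eta where "eta b i = v $ (n + b*m + i)" for b i
  define Q where "Q l i = xi \<bullet> (A ^\<^sub>m l *\<^sub>v col B i)" for l i
  obtain d a where d: "d \<le> n" "a d \<noteq> 0"
    and dep: "\<forall>z\<in>carrier_vec n. (\<Sum>k\<le>d. a k * (xi \<bullet> (A ^\<^sub>m k *\<^sub>v z))) = 0"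
    using dependence[OF A xi] by blast
  define W where "W s i = (\<Sum>k\<le>d. a k * ((if s < k then Q (k-1-s) i else 0)
            + (if k \<le> s \<and> s < k + L then eta (s-k) i else 0)))" for s i
  have rel: "xi \<bullet> x c + (\<Sum>b<L. \<Sum>i<m. eta b i * u (c + b) $ i) = 0"
    if xuT: "(x,u,T) \<in> S" and c: "c + L \<le> T" for x u T c
  proof -
    have xc: "x c \<in> carrier_vec n" using traj xuT c L by auto
    have 1: "(\<Sum>r<n. v $ r * x c $ r) = xi \<bullet> x c"
      using xc unfolding xi_def scalar_prod_def by (simp add: lessThan_atLeast0)
    have 2: "(\<Sum>r<m*L. v $ (n + r) * u (r div m + c) $ (r mod m)) = (\<Sum>b<L. \<Sum>i<m. eta b i * u (c + b) $ i)"
      unfolding blocksum eta_def by (intro sum.cong refl, simp add: dm ac_simps)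
    show ?thesis using K xuT c 1 2 by fastforce
  qed
  have Wsum: "(\<Sum>s<L+n. \<Sum>i<m. W s i * u (c + s) $ i) = 0"
    if xuT: "(x,u,T) \<in> S" and c: "c + (L+n) \<le> T" for x u T c
  proof -
    have dims: "\<forall>k<T. x k \<in> carrier_vec n \<and> u k \<in> carrier_vec m"
      and dyn: "\<forall>k. k + 1 < T \<longrightarrow> x (k + 1) = A *\<^sub>v x k + B *\<^sub>v u k" using traj xuT by auto
    have exp: "xi \<bullet> x (c + k) = xi \<bullet> (A ^\<^sub>m k *\<^sub>v x c) + (\<Sum>s<k. \<Sum>i<m. Q (k-1-s) i * u (c + s) $ i)"
      if k: "k \<le> d" for k
    proof -
      have ck: "c + k < T" using c k d L by simp
      have xck: "x (c + k) \<in> carrier_vec n" using dims ck by simp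
      have "xi \<bullet> (A ^\<^sub>m 0 *\<^sub>v x (c + k)) = xi \<bullet> (A ^\<^sub>m (0 + k) *\<^sub>v x c) +
          (\<Sum>s<k. xi \<bullet> (A ^\<^sub>m (0 + k - 1 - s) *\<^sub>v (B *\<^sub>v u (c + s))))"
        by (rule expand[OF A B xi dims dyn ck])
      moreover have "A ^\<^sub>m 0 *\<^sub>v x (c + k) = x (c + k)" using A xck by simp
      moreover have "xi \<bullet> (A ^\<^sub>m (k - 1 - s) *\<^sub>v (B *\<^sub>v u (c + s))) = (\<Sum>i<m. Q (k-1-s) i * u (c + s) $ i)"
        if s: "s < k" for s
        unfolding Q_def by (rule Qlemma[OF A B xi], insert dims s ck, auto)
      ultimately show ?thesis by simp
    qed
    have relk: "xi \<bullet> x (c + k) + (\<Sum>b<L. \<Sum>i<m. eta b i * u (c + k + b) $ i) = 0" if k: "k \<le> d" for k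
      using rel[OF xuT, of "c + k"] c k d by simp
    have "(\<Sum>s<L+n. \<Sum>i<m. W s i * u (c + s) $ i) =
       (\<Sum>k\<le>d. a k * ((\<Sum>s<k. \<Sum>i<m. Q (k-1-s) i * u (c + s) $ i) + (\<Sum>b<L. \<Sum>i<m. eta b i * u (c + (k+b)) $ i)))"
      unfolding W_def by (rule sum_rearrange, insert d, simp)
    also have "\<dots> = (\<Sum>k\<le>d. a k * (- (xi \<bullet> (A ^\<^sub>m k *\<^sub>v x c))))"
    proof (rule sum.cong[OF refl])
      fix k assume "k \<in> {..d}"
      hence k: "k \<le> d" by simp
      show "a k * ((\<Sum>s<k. \<Sum>i<m. Q (k-1-s) i * u (c + s) $ i) + (\<Sum>b<L. \<Sum>i<m. eta b i * u (c + (k+b)) $ i))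
          = a k * (- (xi \<bullet> (A ^\<^sub>m k *\<^sub>v x c)))"
      proof -
        have "(\<Sum>s<k. \<Sum>i<m. Q (k-1-s) i * u (c + s) $ i) + (\<Sum>b<L. \<Sum>i<m. eta b i * u (c + (k+b)) $ i)
            = - (xi \<bullet> (A ^\<^sub>m k *\<^sub>v x c))"
          using exp[OF k] relk[OF k] by (simp add: add.assoc)
        thus ?thesis by simp
      qed
    qed
    also have "\<dots> = - (\<Sum>k\<le>d. a k * (xi \<bullet> (A ^\<^sub>m k *\<^sub>v x c)))"
      by (simp add: sum_negf)
    also have "\<dots> = 0" using dep dims c L by simp
    finally show ?thesis .
  qed
  have W0: "W s i = 0" if s: "s < L + n" and i: "i < m" for s i
  proof -
    define w where "w = vec (m*(L+n)) (\<lambda>r. W (r div m) (r mod m))"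
    have wc: "w \<in> carrier_vec (m*(L+n))" unfolding w_def by simp
    have pre: "(\<Sum>r<m*(L+n). w $ r * u (r div m + c) $ (r mod m)) = 0"
      if xuT: "(x,u,T) \<in> S" and c: "c + (L+n) \<le> T" for x u T c
    proof -
      have "(\<Sum>r<m*(L+n). w $ r * u (r div m + c) $ (r mod m)) = (\<Sum>s<L+n. \<Sum>i<m. W s i * u (c + s) $ i)"
        unfolding blocksum
      proof (intro sum.cong refl)
        fix s i assume "s \<in> {..<L+n}" "i \<in> {..<m}"
        thus "w $ (s * m + i) * u ((s * m + i) div m + c) $ ((s * m + i) mod m) = W s i * u (c + s) $ i"
          unfolding w_def using idx_lt[of s "L+n" i m] by (simp add: dm add.commute)
      qed
      thus ?thesis using Wsum[OF xuT c] by simp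
    qed
    have "\<forall>(x,u,T)\<in>S. \<forall>c. c + (L+n) \<le> T \<longrightarrow> (\<Sum>r<m*(L+n). w $ r * u (r div m + c) $ (r mod m)) = 0"
      using pre by auto
    hence "w = 0\<^sub>v (m*(L+n))" using PE wc by blast
    hence "w $ (s*m+i) = 0" using idx_lt[OF s i] by simp
    thus ?thesis unfolding w_def using idx_lt[OF s i] i by (simp add: dm)
  qed
  have eta0: "eta b i = 0" if b: "b < L" and i: "i < m" for b i
    using b
  proof (induction "L - b" arbitrary: b rule: less_induct)
    case (less b)
    have "W (b + d) i = 0" using W0[OF _ i] less.prems d by simp
    moreover have "W (b + d) i = a d * eta b i + (\<Sum>k<d. a k * ((if b + d < k then Q (k-1-(b+d)) i else 0)
            + (if k \<le> b + d \<and> b + d < k + L then eta (b+d-k) i else 0)))"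
      unfolding W_def using less.prems by (simp add: lessThan_Suc_atMost[symmetric])
    moreover have "(\<Sum>k<d. a k * ((if b + d < k then Q (k-1-(b+d)) i else 0)
            + (if k \<le> b + d \<and> b + d < k + L then eta (b+d-k) i else 0))) = 0"
    proof (rule sum.neutral, intro ballI)
      fix k assume "k \<in> {..<d}"
      hence k: "k < d" by simp
      have "eta (b+d-k) i = 0" if "b + d < k + L"
        by (rule less.hyps, insert k that less.prems, auto)
      thus "a k * ((if b + d < k then Q (k-1-(b+d)) i else 0)
            + (if k \<le> b + d \<and> b + d < k + L then eta (b+d-k) i else 0)) = 0" using k by auto
    qed
    ultimately show ?case using d by simp
  qed
  have Qz: "Q l i = 0" if l: "l < d" and i: "i < m" for l i
    using l
  proof (induction l rule: less_induct)
    case (less l)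
    define s where "s = d - 1 - l"
    have s: "s < L + n" "s < d" using less.prems d unfolding s_def by auto
    have "W s i = 0" using W0[OF s(1) i] .
    moreover have "W s i = a d * Q l i + (\<Sum>k<d. a k * ((if s < k then Q (k-1-s) i else 0)
            + (if k \<le> s \<and> s < k + L then eta (s-k) i else 0)))"
    proof -
      have "d - 1 - s = l" using less.prems unfolding s_def by simp
      thus ?thesis unfolding W_def using s by (simp add: lessThan_Suc_atMost[symmetric])
    qed
    moreover have "(\<Sum>k<d. a k * ((if s < k then Q (k-1-s) i else 0)
            + (if k \<le> s \<and> s < k + L then eta (s-k) i else 0))) = 0"
    proof (rule sum.neutral, intro ballI)
      fix k assume "k \<in> {..<d}"
      hence k: "k < d" by simp
      have "Q (k-1-s) i = 0" if "s < k"
        by (rule less.IH, insert k that less.prems, auto simp: s_def)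
      moreover have "eta (s-k) i = 0" if "k \<le> s \<and> s < k + L"
        by (rule eta0[OF _ i], insert that, auto)
      ultimately show "a k * ((if s < k then Q (k-1-s) i else 0)
            + (if k \<le> s \<and> s < k + L then eta (s-k) i else 0)) = 0" by auto
    qed
    ultimately show ?case using d by simp
  qed
  have Qall: "Q l i = 0" if i: "i < m" for l i
  proof (induction l rule: less_induct)
    case (less l)
    show ?case
    proof (cases "l < d")
      case True thus ?thesis using Qz i by simp
    next
      case False
      define z where "z = A ^\<^sub>m (l - d) *\<^sub>v col B i"
      have cB: "col B i \<in> carrier_vec n" using B by (intro carrier_vecI, simp)
      have z: "z \<in> carrier_vec n" unfolding z_def by (rule mult_mat_vec_carrier[OF pow_carrier_mat[OF A] cB])
      have Qk: "xi \<bullet> (A ^\<^sub>m k *\<^sub>v z) = Q (k + (l - d)) i" for k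
      proof -
        have "A ^\<^sub>m k *\<^sub>v z = (A ^\<^sub>m k * A ^\<^sub>m (l - d)) *\<^sub>v col B i"
          unfolding z_def using A B i by (subst assoc_mult_mat_vec[of _ n n _ n], auto)
        also have "A ^\<^sub>m k * A ^\<^sub>m (l - d) = A ^\<^sub>m (k + (l - d))" by (rule pow_mat_add[OF A, symmetric])
        finally show ?thesis unfolding Q_def by simp
      qed
      have "(\<Sum>k\<le>d. a k * Q (k + (l - d)) i) = 0" using dep[rule_format, OF z] by (simp only: Qk)
      moreover have "(\<Sum>k\<le>d. a k * Q (k + (l - d)) i) = a d * Q l i + (\<Sum>k<d. a k * Q (k + (l - d)) i)"
        using False by (simp add: lessThan_Suc_atMost[symmetric])
      moreover have "(\<Sum>k<d. a k * Q (k + (l - d)) i) = 0"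
        by (rule sum.neutral, intro ballI, insert False, auto intro!: less.IH)
      ultimately show ?thesis using d by simp
    qed
  qed
  have xi0: "xi = 0\<^sub>v n"
  proof -
    define M where "M = hcat n (map (\<lambda>k. A ^\<^sub>m k * B) [0..<n])"
    have Mc: "M \<in> carrier_mat n (dim_col M)" by (intro carrier_matI, simp_all add: M_def)
    have rk: "mrank M = n" using ctrb unfolding controllable_def M_def .
    have "lkc n M xi" unfolding M_def lkc_hcat
    proof
      fix N assume "N \<in> set (map (\<lambda>k. A ^\<^sub>m k * B) [0..<n])"
      then obtain k where N: "N = A ^\<^sub>m k * B" by auto
      have NC: "N \<in> carrier_mat n m" unfolding N by (rule mult_carrier_mat[OF pow_carrier_mat[OF A] B])
      show "lkc n N xi" unfolding lkc_def
      proof (intro allI impI)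
        fix j assume "j < dim_col N"
        hence j: "j < m" using NC by simp
        have "(\<Sum>i<n. xi $ i * N $$ (i, j)) = xi \<bullet> col N j"
          using NC j xi by (simp add: scalar_prod_def lessThan_atLeast0)
        also have "col N j = A ^\<^sub>m k *\<^sub>v col B j" unfolding N by (rule col_mult2[OF pow_carrier_mat[OF A] B j])
        also have "xi \<bullet> \<dots> = 0" using Qall[OF j] unfolding Q_def .
        finally show "(\<Sum>i<n. xi $ i * N $$ (i, j)) = 0" .
      qed
    qed
    thus ?thesis using F2[OF Mc rk xi] unfolding lkc_def by blast
  qed
  show ?thesis
  proof (rule eq_vecI)
    show "dim_vec v = dim_vec (0\<^sub>v (n + m * L))" using v by simp
    fix r assume "r < dim_vec (0\<^sub>v (n + m * L))"
    hence r: "r < n + m * L" by simp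
    show "v $ r = 0\<^sub>v (n + m * L) $ r"
    proof (cases "r < n")
      case True
      have "xi $ r = 0" using xi0 True by simp
      thus ?thesis using True r unfolding xi_def by simp
    next
      case False
      define r' where "r' = r - n"
      have r': "r' < m * L" "r = n + r'" using False r unfolding r'_def by auto
      have m0: "0 < m" using r' by (cases m) auto
      have b: "r' div m < L" using r' by (simp add: less_mult_imp_div_less mult.commute)
      have i: "r' mod m < m" using m0 by simp
      have "eta (r' div m) (r' mod m) = 0" using eta0[OF b i] .
      moreover have "n + r' div m * m + r' mod m = r" using r' by simp
      ultimately show ?thesis unfolding eta_def using r by simp
    qed
  qed
qed




definition lk2 :: "nat \<Rightarrow> nat \<Rightarrow> real mat \<Rightarrow> real mat \<Rightarrow> real vec \<Rightarrow> bool" where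
  "lk2 r1 r2 X U v \<longleftrightarrow> (\<forall>j<dim_col X. (\<Sum>i<r1. v $ i * X $$ (i, j)) + (\<Sum>i<r2. v $ (r1 + i) * U $$ (i, j)) = 0)"

lemma hcat_Cons_entry: "i < r \<Longrightarrow> j < dim_col M + dim_col (hcat r Ms) \<Longrightarrow>
  hcat r (M # Ms) $$ (i, j) = (if j < dim_col M then M $$ (i, j) else hcat r Ms $$ (i, j - dim_col M))"
  by (simp add: Let_def)

lemma sum_split_add: "(\<Sum>i<(r1::nat)+r2. (f i :: real)) = (\<Sum>i<r1. f i) + (\<Sum>i<r2. f (r1 + i))"
proof -
  have e: "{..<r1+r2} = {..<r1} \<union> {r1..<r1+r2}" by auto
  have "(\<Sum>i<r1+r2. f i) = (\<Sum>i<r1. f i) + (\<Sum>i\<in>{r1..<r1+r2}. f i)"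
    unfolding e by (rule sum.union_disjoint, auto)
  thus ?thesis by (simp add: sum_shift_ivl)
qed

lemma append_rows_entry:
  assumes "i < dim_row X + dim_row U" "j < dim_col X"
  shows "(X @\<^sub>r U) $$ (i, j) = (if i < dim_row X then X $$ (i, j) else U $$ (i - dim_row X, j))"
  using assms unfolding append_rows_def by simp

lemma stack_lk:
  assumes X: "X \<in> carrier_mat r1 c" and U: "U \<in> carrier_mat r2 c"
  shows "(\<forall>j<c. (\<Sum>i<r1+r2. v $ i * (X @\<^sub>r U) $$ (i, j)) = 0) \<longleftrightarrow> lk2 r1 r2 X U v"
proof -
  have "(\<Sum>i<r1+r2. v $ i * (X @\<^sub>r U) $$ (i, j)) =
      (\<Sum>i<r1. v $ i * X $$ (i, j)) + (\<Sum>i<r2. v $ (r1 + i) * U $$ (i, j))" if j: "j < c" for j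
  proof -
    have "(\<Sum>i<r1+r2. v $ i * (X @\<^sub>r U) $$ (i, j)) =
      (\<Sum>i<r1. v $ i * (X @\<^sub>r U) $$ (i, j)) + (\<Sum>i<r2. v $ (r1 + i) * (X @\<^sub>r U) $$ (r1 + i, j))"
      by (rule sum_split_add)
    also have "(\<Sum>i<r1. v $ i * (X @\<^sub>r U) $$ (i, j)) = (\<Sum>i<r1. v $ i * X $$ (i, j))"
      by (rule sum.cong[OF refl], subst append_rows_entry, insert X U j, auto)
    also have "(\<Sum>i<r2. v $ (r1 + i) * (X @\<^sub>r U) $$ (r1 + i, j)) = (\<Sum>i<r2. v $ (r1 + i) * U $$ (i, j))"
      by (rule sum.cong[OF refl], subst append_rows_entry, insert X U j, auto)
    finally show ?thesis .
  qed
  thus ?thesis unfolding lk2_def using X by auto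
qed

lemma lk2_hcat:
  assumes "list_all2 (\<lambda>X U. dim_col X = dim_col U) Xs Us"
  shows "lk2 r1 r2 (hcat r1 Xs) (hcat r2 Us) v \<longleftrightarrow> list_all2 (\<lambda>X U. lk2 r1 r2 X U v) Xs Us"
  using assms
proof (induction rule: list_all2_induct)
  case Nil then show ?case by (simp add: lk2_def)
next
  case (Cons X Xs U Us)
  let ?NX = "hcat r1 Xs" and ?NU = "hcat r2 Us"
  have dcN: "dim_col ?NX = dim_col ?NU" using Cons(2)
    by (induction rule: list_all2_induct) auto
  define F where "F j = (\<Sum>i<r1. v $ i * hcat r1 (X # Xs) $$ (i, j)) + (\<Sum>i<r2. v $ (r1 + i) * hcat r2 (U # Us) $$ (i, j))" for j
  have F1: "F j = (\<Sum>i<r1. v $ i * X $$ (i, j)) + (\<Sum>i<r2. v $ (r1 + i) * U $$ (i, j))"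
    if j: "j < dim_col X" for j
  proof -
    have "(\<Sum>i<r1. v $ i * hcat r1 (X # Xs) $$ (i, j)) = (\<Sum>i<r1. v $ i * X $$ (i, j))"
      by (rule sum.cong[OF refl], subst hcat_Cons_entry, insert j, auto simp del: hcat.simps)
    moreover have "(\<Sum>i<r2. v $ (r1 + i) * hcat r2 (U # Us) $$ (i, j)) = (\<Sum>i<r2. v $ (r1 + i) * U $$ (i, j))"
      by (rule sum.cong[OF refl], subst hcat_Cons_entry, insert j Cons(1), auto simp del: hcat.simps)
    ultimately show ?thesis unfolding F_def by simp
  qed
  have F2: "F (j + dim_col X) = (\<Sum>i<r1. v $ i * ?NX $$ (i, j)) + (\<Sum>i<r2. v $ (r1 + i) * ?NU $$ (i, j))"
    if j: "j < dim_col ?NX" for j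
  proof -
    have "(\<Sum>i<r1. v $ i * hcat r1 (X # Xs) $$ (i, j + dim_col X)) = (\<Sum>i<r1. v $ i * ?NX $$ (i, j))"
      by (rule sum.cong[OF refl], subst hcat_Cons_entry, insert j, auto simp del: hcat.simps)
    moreover have "(\<Sum>i<r2. v $ (r1 + i) * hcat r2 (U # Us) $$ (i, j + dim_col X)) = (\<Sum>i<r2. v $ (r1 + i) * ?NU $$ (i, j))"
      by (rule sum.cong[OF refl], subst hcat_Cons_entry, insert j Cons(1) dcN, auto simp del: hcat.simps)
    ultimately show ?thesis unfolding F_def by simp
  qed
  have dc: "dim_col (hcat r1 (X # Xs)) = dim_col X + dim_col ?NX" by simp
  have "lk2 r1 r2 (hcat r1 (X # Xs)) (hcat r2 (U # Us)) v \<longleftrightarrow> (\<forall>j<dim_col X + dim_col ?NX. F j = 0)"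
    unfolding lk2_def dc F_def ..
  also have "\<dots> \<longleftrightarrow> lk2 r1 r2 X U v \<and> lk2 r1 r2 ?NX ?NU v"
  proof
    assume h: "\<forall>j<dim_col X + dim_col ?NX. F j = 0"
    show "lk2 r1 r2 X U v \<and> lk2 r1 r2 ?NX ?NU v" unfolding lk2_def
    proof (intro conjI allI impI)
      fix j assume j: "j < dim_col X"
      thus "(\<Sum>i<r1. v $ i * X $$ (i, j)) + (\<Sum>i<r2. v $ (r1 + i) * U $$ (i, j)) = 0"
        using h[rule_format, of j] F1[OF j] by simp
    next
      fix j assume j: "j < dim_col ?NX"
      thus "(\<Sum>i<r1. v $ i * ?NX $$ (i, j)) + (\<Sum>i<r2. v $ (r1 + i) * ?NU $$ (i, j)) = 0"
        using h[rule_format, of "j + dim_col X"] F2[OF j] by simp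
    qed
  next
    assume h: "lk2 r1 r2 X U v \<and> lk2 r1 r2 ?NX ?NU v"
    show "\<forall>j<dim_col X + dim_col ?NX. F j = 0"
    proof (intro allI impI)
      fix j assume j: "j < dim_col X + dim_col ?NX"
      show "F j = 0"
      proof (cases "j < dim_col X")
        case True thus ?thesis using F1[OF True] h unfolding lk2_def by simp
      next
        case False
        define j' where "j' = j - dim_col X"
        have j': "j' < dim_col ?NX" "j = j' + dim_col X" using j False unfolding j'_def by auto
        show ?thesis unfolding j'(2) F2[OF j'(1)] using h j'(1) unfolding lk2_def by simp
      qed
    qed
  qed
  finally show ?case using Cons(3) by simp
qed




lemma hankel_dims[simp]: "dim_row (hankel q K z a b) = q * K" "dim_col (hankel q K z a b) = b + 2 - a - K"
  unfolding hankel_def by simp_all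

lemma hankel_entry: "r < q * K \<Longrightarrow> c < b + 2 - a - K \<Longrightarrow> hankel q K z a b $$ (r, c) = z (a + r div q + c) $ (r mod q)"
  unfolding hankel_def by simp

lemma traj_lk:
  assumes L: "1 \<le> L" and T: "L \<le> T"
    and h: "lk2 n (m*L) (hankel n 1 x 0 (T-L)) (hankel m L u 0 (T-1)) v"
  shows "\<forall>c. c + L \<le> T \<longrightarrow> (\<Sum>r<n. v $ r * x c $ r) + (\<Sum>r<m*L. v $ (n + r) * u (r div m + c) $ (r mod m)) = 0"
proof (intro allI impI)
  fix c assume c: "c + L \<le> T"
  have c1: "c < dim_col (hankel n 1 x 0 (T-L))" using c L by simp
  have c2: "c < T - 1 + 2 - 0 - L" using c L by simp
  have "(\<Sum>r<n. v $ r * hankel n 1 x 0 (T-L) $$ (r, c)) + (\<Sum>r<m*L. v $ (n + r) * hankel m L u 0 (T-1) $$ (r, c)) = 0"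
    using h c1 unfolding lk2_def by simp
  moreover have "(\<Sum>r<n. v $ r * hankel n 1 x 0 (T-L) $$ (r, c)) = (\<Sum>r<n. v $ r * x c $ r)"
    by (rule sum.cong[OF refl], subst hankel_entry, insert c1, auto)
  moreover have "(\<Sum>r<m*L. v $ (n + r) * hankel m L u 0 (T-1) $$ (r, c)) = (\<Sum>r<m*L. v $ (n + r) * u (r div m + c) $ (r mod m))"
    by (rule sum.cong[OF refl], subst hankel_entry, insert c2, auto)
  ultimately show "(\<Sum>r<n. v $ r * x c $ r) + (\<Sum>r<m*L. v $ (n + r) * u (r div m + c) $ (r mod m)) = 0" by simp
qed

lemma pe_lkc:
  assumes K: "1 \<le> K" and T: "K \<le> T"
    and h: "\<forall>c. c + K \<le> T \<longrightarrow> (\<Sum>r<m*K. w $ r * u (r div m + c) $ (r mod m)) = 0"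
  shows "lkc (m*K) (hankel m K u 0 (T-1)) w"
  unfolding lkc_def
proof (intro allI impI)
  fix c assume "c < dim_col (hankel m K u 0 (T - 1))"
  hence c: "c < T - 1 + 2 - 0 - K" "c + K \<le> T" using K T by auto
  have "(\<Sum>r<m*K. w $ r * hankel m K u 0 (T-1) $$ (r, c)) = (\<Sum>r<m*K. w $ r * u (r div m + c) $ (r mod m))"
    by (rule sum.cong[OF refl], subst hankel_entry, insert c, auto)
  thus "(\<Sum>r<m*K. w $ r * hankel m K u 0 (T-1) $$ (r, c)) = 0" using h c by simp
qed

lemma hankel_cum_eq:
  "hankel_cum q K z 0 b \<alpha> lo hi = hankel q K (\<lambda>k. vec q (\<lambda>j. \<Sum>i\<in>{lo..hi}. \<alpha> i * z i k $ j)) 0 b"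
proof (rule eq_matI)
  fix r c assume r: "r < dim_row (hankel q K (\<lambda>k. vec q (\<lambda>j. \<Sum>i\<in>{lo..hi}. \<alpha> i * z i k $ j)) 0 b)"
    and c: "c < dim_col (hankel q K (\<lambda>k. vec q (\<lambda>j. \<Sum>i\<in>{lo..hi}. \<alpha> i * z i k $ j)) 0 b)"
  have r': "r < q * K" and c': "c < b + 2 - 0 - K" using r c by auto
  have q: "r mod q < q" using r' by (cases q) auto
  show "hankel_cum q K z 0 b \<alpha> lo hi $$ (r, c) = hankel q K (\<lambda>k. vec q (\<lambda>j. \<Sum>i\<in>{lo..hi}. \<alpha> i * z i k $ j)) 0 b $$ (r, c)"
    unfolding hankel_cum_def using r' c' q by (simp add: hankel_entry)
qed (simp_all add: hankel_cum_def)

lemma lkc_smult: "lkc r M w \<Longrightarrow> dim_row M = r \<Longrightarrow> lkc r (\<alpha> \<cdot>\<^sub>m M) w"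
  unfolding lkc_def by (auto simp: mult.left_commute[of _ \<alpha>] sum_distrib_left[symmetric])

lemma lk2_smult:
  assumes "lk2 r1 r2 (\<alpha> \<cdot>\<^sub>m X) (\<alpha> \<cdot>\<^sub>m U) v" "\<alpha> \<noteq> 0" "dim_row X = r1" "dim_row U = r2" "dim_col X = dim_col U"
  shows "lk2 r1 r2 X U v"
  unfolding lk2_def
proof (intro allI impI)
  fix j assume j: "j < dim_col X"
  have "(\<Sum>i<r1. v $ i * (\<alpha> \<cdot>\<^sub>m X) $$ (i, j)) + (\<Sum>i<r2. v $ (r1 + i) * (\<alpha> \<cdot>\<^sub>m U) $$ (i, j)) = 0"
    using assms(1) j unfolding lk2_def by simp
  moreover have "(\<Sum>i<r1. v $ i * (\<alpha> \<cdot>\<^sub>m X) $$ (i, j)) = \<alpha> * (\<Sum>i<r1. v $ i * X $$ (i, j))"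
    using j assms(3) by (simp add: sum_distrib_left mult.left_commute)
  moreover have "(\<Sum>i<r2. v $ (r1 + i) * (\<alpha> \<cdot>\<^sub>m U) $$ (i, j)) = \<alpha> * (\<Sum>i<r2. v $ (r1 + i) * U $$ (i, j))"
    using j assms(4,5) by (simp add: sum_distrib_left mult.left_commute)
  ultimately have "\<alpha> * ((\<Sum>i<r1. v $ i * X $$ (i, j)) + (\<Sum>i<r2. v $ (r1 + i) * U $$ (i, j))) = 0"
    by (simp add: ring_distribs)
  thus "(\<Sum>i<r1. v $ i * X $$ (i, j)) + (\<Sum>i<r2. v $ (r1 + i) * U $$ (i, j)) = 0" using assms(2) by simp
qed

lemma lincomb_traj:
  fixes A B :: "real mat"
  assumes A: "A \<in> carrier_mat n n" and B: "B \<in> carrier_mat n m"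
    and h: "\<forall>i\<in>I. x i k \<in> carrier_vec n \<and> u i k \<in> carrier_vec m \<and> x i (k+1) = A *\<^sub>v x i k + B *\<^sub>v u i k"
  shows "vec n (\<lambda>j. \<Sum>i\<in>I. \<alpha> i * x i (k+1) $ j) =
     A *\<^sub>v vec n (\<lambda>j. \<Sum>i\<in>I. \<alpha> i * x i k $ j) + B *\<^sub>v vec m (\<lambda>j. \<Sum>i\<in>I. \<alpha> i * u i k $ j)"
proof (rule eq_vecI)
  show "dim_vec (vec n (\<lambda>j. \<Sum>i\<in>I. \<alpha> i * x i (k+1) $ j)) =
    dim_vec (A *\<^sub>v vec n (\<lambda>j. \<Sum>i\<in>I. \<alpha> i * x i k $ j) + B *\<^sub>v vec m (\<lambda>j. \<Sum>i\<in>I. \<alpha> i * u i k $ j))"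
    using A B by simp
  fix j assume "j < dim_vec (A *\<^sub>v vec n (\<lambda>j. \<Sum>i\<in>I. \<alpha> i * x i k $ j) + B *\<^sub>v vec m (\<lambda>j. \<Sum>i\<in>I. \<alpha> i * u i k $ j))"
  hence j: "j < n" using A B by simp
  have rhs: "(A *\<^sub>v vec n (\<lambda>j. \<Sum>i\<in>I. \<alpha> i * x i k $ j) + B *\<^sub>v vec m (\<lambda>j. \<Sum>i\<in>I. \<alpha> i * u i k $ j)) $ j
     = (\<Sum>l<n. A $$ (j, l) * (\<Sum>i\<in>I. \<alpha> i * x i k $ l)) + (\<Sum>l<m. B $$ (j, l) * (\<Sum>i\<in>I. \<alpha> i * u i k $ l))"
    using A B j by (simp add: scalar_prod_def lessThan_atLeast0)
  have each: "x i (k+1) $ j = (\<Sum>l<n. A $$ (j, l) * x i k $ l) + (\<Sum>l<m. B $$ (j, l) * u i k $ l)" if i: "i \<in> I" for i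
  proof -
    have "x i (k+1) $ j = (A *\<^sub>v x i k + B *\<^sub>v u i k) $ j" using h i by simp
    also have "\<dots> = (\<Sum>l<n. A $$ (j, l) * x i k $ l) + (\<Sum>l<m. B $$ (j, l) * u i k $ l)"
    proof -
      have "x i k \<in> carrier_vec n" "u i k \<in> carrier_vec m" using h i by auto
      thus ?thesis using A B j by (simp add: scalar_prod_def lessThan_atLeast0)
    qed
    finally show ?thesis .
  qed
  have "(\<Sum>i\<in>I. \<alpha> i * x i (k+1) $ j) = (\<Sum>i\<in>I. \<alpha> i * ((\<Sum>l<n. A $$ (j, l) * x i k $ l) + (\<Sum>l<m. B $$ (j, l) * u i k $ l)))"
    using each by simp
  also have "\<dots> = (\<Sum>l<n. A $$ (j, l) * (\<Sum>i\<in>I. \<alpha> i * x i k $ l)) + (\<Sum>l<m. B $$ (j, l) * (\<Sum>i\<in>I. \<alpha> i * u i k $ l))"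
    by (simp add: ring_distribs sum.distrib sum_distrib_left sum.swap[of _ I] mult.left_commute)
  finally show "vec n (\<lambda>j. \<Sum>i\<in>I. \<alpha> i * x i (k+1) $ j) $ j =
     (A *\<^sub>v vec n (\<lambda>j. \<Sum>i\<in>I. \<alpha> i * x i k $ j) + B *\<^sub>v vec m (\<lambda>j. \<Sum>i\<in>I. \<alpha> i * u i k $ j)) $ j"
    using rhs j by simp
qed




definition Kp :: "((nat \<Rightarrow> real vec) \<times> (nat \<Rightarrow> real vec) \<times> nat) set \<Rightarrow> nat \<Rightarrow> nat \<Rightarrow> nat \<Rightarrow> real vec \<Rightarrow> bool" where
  "Kp S n m L v \<longleftrightarrow> (\<forall>(x,u,T)\<in>S. \<forall>c. c + L \<le> T \<longrightarrow>
      (\<Sum>r<n. v $ r * x c $ r) + (\<Sum>r<m*L. v $ (n + r) * u (r div m + c) $ (r mod m)) = 0)"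

definition Pp :: "((nat \<Rightarrow> real vec) \<times> (nat \<Rightarrow> real vec) \<times> nat) set \<Rightarrow> nat \<Rightarrow> nat \<Rightarrow> real vec \<Rightarrow> bool" where
  "Pp S m N w \<longleftrightarrow> (\<forall>(x,u,T)\<in>S. \<forall>c. c + N \<le> T \<longrightarrow>
      (\<Sum>r<m*N. w $ r * u (r div m + c) $ (r mod m)) = 0)"

lemma main_gen:
  fixes A B Hu X U :: "real mat" and S :: "((nat \<Rightarrow> real vec) \<times> (nat \<Rightarrow> real vec) \<times> nat) set"
  assumes A: "A \<in> carrier_mat n n" and B: "B \<in> carrier_mat n m"
    and ctrb: "controllable n A B" and L: "1 \<le> L"
    and traj: "\<forall>(x,u,T)\<in>S. (\<forall>k<T. x k \<in> carrier_vec n \<and> u k \<in> carrier_vec m) \<and>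
                 (\<forall>k. k + 1 < T \<longrightarrow> x (k + 1) = A *\<^sub>v x k + B *\<^sub>v u k)"
    and Hu: "Hu \<in> carrier_mat (m*(L+n)) cH" and rkHu: "mrank Hu = m*(L+n)"
    and PEimp: "\<And>w. w \<in> carrier_vec (m*(L+n)) \<Longrightarrow> Pp S m (L+n) w \<Longrightarrow> lkc (m*(L+n)) Hu w"
    and X: "X \<in> carrier_mat n c" and U: "U \<in> carrier_mat (m*L) c"
    and Kimp: "\<And>v. v \<in> carrier_vec (n + m*L) \<Longrightarrow> lk2 n (m*L) X U v \<Longrightarrow> Kp S n m L v"
  shows "mrank (X @\<^sub>r U) = n + m*L"
proof (rule F1)
  show "X @\<^sub>r U \<in> carrier_mat (n + m*L) c" using X U by auto
  have PE: "\<forall>w\<in>carrier_vec (m*(L+n)). (\<forall>(x,u,T)\<in>S. \<forall>c. c + (L+n) \<le> T \<longrightarrow>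
                (\<Sum>r<m*(L+n). w $ r * u (r div m + c) $ (r mod m)) = 0) \<longrightarrow> w = 0\<^sub>v (m*(L+n))"
  proof (intro ballI impI)
    fix w :: "real vec" assume w: "w \<in> carrier_vec (m*(L+n))"
      and h: "\<forall>(x,u,T)\<in>S. \<forall>c. c + (L+n) \<le> T \<longrightarrow> (\<Sum>r<m*(L+n). w $ r * u (r div m + c) $ (r mod m)) = 0"
    have "lkc (m*(L+n)) Hu w" using PEimp[OF w] h unfolding Pp_def by blast
    hence "\<forall>j<cH. (\<Sum>i<m*(L+n). w $ i * Hu $$ (i, j)) = 0" using Hu unfolding lkc_def by simp
    thus "w = 0\<^sub>v (m*(L+n))" by (rule F2[OF Hu rkHu w])
  qed
  show "\<forall>v\<in>carrier_vec (n + m*L). (\<forall>j<c. (\<Sum>i<n + m*L. v $ i * (X @\<^sub>r U) $$ (i, j)) = 0) \<longrightarrow> v = 0\<^sub>v (n + m*L)"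
  proof (intro ballI impI)
    fix v :: "real vec" assume v: "v \<in> carrier_vec (n + m*L)"
      and h: "\<forall>j<c. (\<Sum>i<n + m*L. v $ i * (X @\<^sub>r U) $$ (i, j)) = 0"
    have "lk2 n (m*L) X U v" using h stack_lk[OF X U] by blast
    hence K: "Kp S n m L v" by (rule Kimp[OF v])
    show "v = 0\<^sub>v (n + m*L)"
      by (rule core[OF A B ctrb L traj PE v], insert K, unfold Kp_def)
  qed
qed

lemma list_all2_map_same: "list_all2 P (map f xs) (map g xs) \<longleftrightarrow> (\<forall>x\<in>set xs. P (f x) (g x))"
  by (induction xs) auto

lemma hcat_dimcol_eq: "list_all2 (\<lambda>X U. dim_col X = dim_col U) Xs Us \<Longrightarrow> dim_col (hcat r1 Xs) = dim_col (hcat r2 Us)"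
  by (induction rule: list_all2_induct) auto




lemma part_mos:
  fixes n m p L :: nat
    and A B :: "real mat"
    and T :: "nat \<Rightarrow> nat"
    and u x :: "nat \<Rightarrow> nat \<Rightarrow> real vec"
    and \<alpha> :: "nat \<Rightarrow> real"
  assumes A: "A \<in> carrier_mat n n"
    and B: "B \<in> carrier_mat n m"
    and ctrb: "controllable n A B"
    and u_dim: "\<forall>i\<in>{1..p}. \<forall>k<T i. u i k \<in> carrier_vec m"
    and x_dim: "\<forall>i\<in>{1..p}. \<forall>k<T i. x i k \<in> carrier_vec n"
    and traj: "\<forall>i\<in>{1..p}. \<forall>k. k + 1 < T i \<longrightarrow> x i (k + 1) = A *\<^sub>v x i k + B *\<^sub>v u i k"
    and L: "L \<ge> 1"
    and alpha: "\<forall>i\<in>{1..p}. \<alpha> i \<noteq> 0"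
    and pe: "MCPE m (L + n) u T p"
  shows "mrank (hankel_mos n 1 x 0 (\<lambda>i. T i - L) \<alpha> 1 p @\<^sub>r hankel_mos m L u 0 (\<lambda>i. T i - 1) \<alpha> 1 p)
          = n + m * L"
proof -
  have TL: "\<forall>i\<in>{1..p}. L + n \<le> T i"
    and rk: "mrank (hankel_mos m (L + n) u 0 (\<lambda>i. T i - 1) \<alpha> 1 p) = m * (L + n)"
    using pe alpha unfolding MCPE_def by auto
  define S where "S = (\<lambda>i. (x i, u i, T i)) ` {1..p}"
  define Xs where "Xs = map (\<lambda>i. \<alpha> i \<cdot>\<^sub>m hankel n 1 (x i) 0 (T i - L)) [1..<Suc p]"
  define Us where "Us = map (\<lambda>i. \<alpha> i \<cdot>\<^sub>m hankel m L (u i) 0 (T i - 1)) [1..<Suc p]"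
  define Hs where "Hs = map (\<lambda>i. \<alpha> i \<cdot>\<^sub>m hankel m (L+n) (u i) 0 (T i - 1)) [1..<Suc p]"
  have eqX: "hankel_mos n 1 x 0 (\<lambda>i. T i - L) \<alpha> 1 p = hcat n Xs" unfolding hankel_mos_def Xs_def by simp
  have eqU: "hankel_mos m L u 0 (\<lambda>i. T i - 1) \<alpha> 1 p = hcat (m*L) Us" unfolding hankel_mos_def Us_def by simp
  have eqH: "hankel_mos m (L + n) u 0 (\<lambda>i. T i - 1) \<alpha> 1 p = hcat (m*(L+n)) Hs" unfolding hankel_mos_def Hs_def by simp
  have dims: "list_all2 (\<lambda>X U. dim_col X = dim_col U) Xs Us"
    unfolding Xs_def Us_def list_all2_map_same
  proof (intro ballI)
    fix i assume "i \<in> set [1..<Suc p]"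
    hence "L + n \<le> T i" using TL by auto
    thus "dim_col (\<alpha> i \<cdot>\<^sub>m hankel n 1 (x i) 0 (T i - L)) = dim_col (\<alpha> i \<cdot>\<^sub>m hankel m L (u i) 0 (T i - 1))"
      using L by simp
  qed
  have trajS: "\<forall>(x,u,T)\<in>S. (\<forall>k<T. x k \<in> carrier_vec n \<and> u k \<in> carrier_vec m) \<and>
                 (\<forall>k. k + 1 < T \<longrightarrow> x (k + 1) = A *\<^sub>v x k + B *\<^sub>v u k)"
    unfolding S_def using u_dim x_dim traj by auto
  show ?thesis unfolding eqX eqU
  proof (rule main_gen[OF A B ctrb L trajS, where Hu = "hcat (m*(L+n)) Hs" and cH = "dim_col (hcat (m*(L+n)) Hs)"
        and c = "dim_col (hcat n Xs)"])
    show "hcat (m*(L+n)) Hs \<in> carrier_mat (m*(L+n)) (dim_col (hcat (m*(L+n)) Hs))"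
      by (intro carrier_matI) simp_all
    show "mrank (hcat (m*(L+n)) Hs) = m*(L+n)" using rk eqH by simp
    show "hcat n Xs \<in> carrier_mat n (dim_col (hcat n Xs))" by (intro carrier_matI) simp_all
    show "hcat (m*L) Us \<in> carrier_mat (m*L) (dim_col (hcat n Xs))"
      using hcat_dimcol_eq[OF dims, of n "m*L"] by (intro carrier_matI) simp_all
  next
    fix w :: "real vec" assume w: "w \<in> carrier_vec (m*(L+n))" and P: "Pp S m (L+n) w"
    show "lkc (m*(L+n)) (hcat (m*(L+n)) Hs) w" unfolding lkc_hcat
    proof
      fix N assume "N \<in> set Hs"
      then obtain i where i0: "i \<in> set [1..<Suc p]" and N: "N = \<alpha> i \<cdot>\<^sub>m hankel m (L+n) (u i) 0 (T i - 1)"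
        unfolding Hs_def set_map by blast
      have i: "i \<in> {1..p}" using i0 by (simp del: upt_Suc)
      have "(x i, u i, T i) \<in> S" using i unfolding S_def by auto
      hence h: "\<forall>c. c + (L+n) \<le> T i \<longrightarrow> (\<Sum>r<m*(L+n). w $ r * u i (r div m + c) $ (r mod m)) = 0"
        using P unfolding Pp_def by auto
      have "lkc (m*(L+n)) (hankel m (L+n) (u i) 0 (T i - 1)) w"
        by (rule pe_lkc[OF _ _ h], insert TL i L, auto)
      thus "lkc (m*(L+n)) N w" unfolding N by (rule lkc_smult, simp)
    qed
  next
    fix v :: "real vec" assume v: "v \<in> carrier_vec (n + m*L)" and h: "lk2 n (m*L) (hcat n Xs) (hcat (m*L) Us) v"
    have all: "list_all2 (\<lambda>X U. lk2 n (m*L) X U v) Xs Us" using h lk2_hcat[OF dims] by blast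
    have key: "(\<Sum>r<n. v $ r * x i c $ r) + (\<Sum>r<m*L. v $ (n + r) * u i (r div m + c) $ (r mod m)) = 0"
      if i: "1 \<le> i" "i \<le> p" and c: "c + L \<le> T i" for i c
    proof -
      have "lk2 n (m*L) (\<alpha> i \<cdot>\<^sub>m hankel n 1 (x i) 0 (T i - L)) (\<alpha> i \<cdot>\<^sub>m hankel m L (u i) 0 (T i - 1)) v"
        using all i unfolding Xs_def Us_def list_all2_map_same by auto
      hence "lk2 n (m*L) (hankel n 1 (x i) 0 (T i - L)) (hankel m L (u i) 0 (T i - 1)) v"
      proof (rule lk2_smult)
        have "L + n \<le> T i" using TL i by auto
        thus "dim_col (hankel n 1 (x i) 0 (T i - L)) = dim_col (hankel m L (u i) 0 (T i - 1))" using L by simp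
      qed (insert alpha i, auto)
      from traj_lk[OF L _ this] TL i c
      show ?thesis by auto
    qed
    show "Kp S n m L v" unfolding Kp_def S_def using key by auto
  qed
qed




lemma part_cum:
  fixes n m p L T0 :: nat
    and A B :: "real mat"
    and T :: "nat \<Rightarrow> nat"
    and u x :: "nat \<Rightarrow> nat \<Rightarrow> real vec"
    and \<alpha> :: "nat \<Rightarrow> real"
  assumes A: "A \<in> carrier_mat n n"
    and B: "B \<in> carrier_mat n m"
    and ctrb: "controllable n A B"
    and u_dim: "\<forall>i\<in>{1..p}. \<forall>k<T i. u i k \<in> carrier_vec m"
    and x_dim: "\<forall>i\<in>{1..p}. \<forall>k<T i. x i k \<in> carrier_vec n"
    and traj: "\<forall>i\<in>{1..p}. \<forall>k. k + 1 < T i \<longrightarrow> x i (k + 1) = A *\<^sub>v x i k + B *\<^sub>v u i k"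
    and L: "L \<ge> 1"
    and alpha: "\<forall>i\<in>{1..p}. \<alpha> i \<noteq> 0"
    and Teq: "\<forall>i\<in>{1..p}. T i = T0"
    and pe: "CCPE m (L + n) u T0 p"
  shows "mrank (hankel_cum n 1 x 0 (T0 - L) \<alpha> 1 p @\<^sub>r hankel_cum m L u 0 (T0 - 1) \<alpha> 1 p) = n + m * L"
proof -
  have T0: "L + n \<le> T0"
    and rk: "mrank (hankel_cum m (L + n) u 0 (T0 - 1) \<alpha> 1 p) = m * (L + n)"
    using pe alpha unfolding CCPE_def by auto
  define xb where "xb = (\<lambda>k. vec n (\<lambda>j. \<Sum>i\<in>{1..p}. \<alpha> i * x i k $ j))"
  define ub where "ub = (\<lambda>k. vec m (\<lambda>j. \<Sum>i\<in>{1..p}. \<alpha> i * u i k $ j))"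
  have eqX: "hankel_cum n 1 x 0 (T0 - L) \<alpha> 1 p = hankel n 1 xb 0 (T0 - L)"
    unfolding xb_def by (rule hankel_cum_eq)
  have eqU: "hankel_cum m L u 0 (T0 - 1) \<alpha> 1 p = hankel m L ub 0 (T0 - 1)"
    unfolding ub_def by (rule hankel_cum_eq)
  have eqH: "hankel_cum m (L + n) u 0 (T0 - 1) \<alpha> 1 p = hankel m (L + n) ub 0 (T0 - 1)"
    unfolding ub_def by (rule hankel_cum_eq)
  define S where "S = {(xb, ub, T0)}"
  have trajS: "\<forall>(x,u,T)\<in>S. (\<forall>k<T. x k \<in> carrier_vec n \<and> u k \<in> carrier_vec m) \<and>
                 (\<forall>k. k + 1 < T \<longrightarrow> x (k + 1) = A *\<^sub>v x k + B *\<^sub>v u k)"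
  proof -
    have "xb (k + 1) = A *\<^sub>v xb k + B *\<^sub>v ub k" if k: "k + 1 < T0" for k
      unfolding xb_def ub_def
      by (rule lincomb_traj[OF A B], insert u_dim x_dim traj Teq k, auto)
    thus ?thesis unfolding S_def xb_def ub_def by auto
  qed
  have dc: "dim_col (hankel n 1 xb 0 (T0 - L)) = dim_col (hankel m L ub 0 (T0 - 1))" using T0 L by simp
  show ?thesis unfolding eqX eqU
  proof (rule main_gen[OF A B ctrb L trajS, where Hu = "hankel m (L + n) ub 0 (T0 - 1)"
        and cH = "dim_col (hankel m (L + n) ub 0 (T0 - 1))" and c = "dim_col (hankel n 1 xb 0 (T0 - L))"])
    show "hankel m (L + n) ub 0 (T0 - 1) \<in> carrier_mat (m*(L+n)) (dim_col (hankel m (L + n) ub 0 (T0 - 1)))"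
      by (intro carrier_matI) simp_all
    show "mrank (hankel m (L + n) ub 0 (T0 - 1)) = m*(L+n)" using rk eqH by simp
    show "hankel n 1 xb 0 (T0 - L) \<in> carrier_mat n (dim_col (hankel n 1 xb 0 (T0 - L)))"
      by (intro carrier_matI) simp_all
    show "hankel m L ub 0 (T0 - 1) \<in> carrier_mat (m*L) (dim_col (hankel n 1 xb 0 (T0 - L)))"
      using dc by (intro carrier_matI) simp_all
  next
    fix w :: "real vec" assume w: "w \<in> carrier_vec (m*(L+n))" and P: "Pp S m (L+n) w"
    have h: "\<forall>c. c + (L+n) \<le> T0 \<longrightarrow> (\<Sum>r<m*(L+n). w $ r * ub (r div m + c) $ (r mod m)) = 0"
      using P unfolding Pp_def S_def by auto
    show "lkc (m*(L+n)) (hankel m (L + n) ub 0 (T0 - 1)) w"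
      by (rule pe_lkc[OF _ _ h], insert T0 L, auto)
  next
    fix v :: "real vec" assume v: "v \<in> carrier_vec (n + m*L)"
      and h: "lk2 n (m*L) (hankel n 1 xb 0 (T0 - L)) (hankel m L ub 0 (T0 - 1)) v"
    from traj_lk[OF L _ h] T0
    show "Kp S n m L v" unfolding Kp_def S_def by auto
  qed
qed

lemma part_hyb:
  fixes n m p pbar L T0 :: nat
    and A B :: "real mat"
    and T :: "nat \<Rightarrow> nat"
    and u x :: "nat \<Rightarrow> nat \<Rightarrow> real vec"
    and \<alpha> :: "nat \<Rightarrow> real"
  assumes A: "A \<in> carrier_mat n n"
    and B: "B \<in> carrier_mat n m"
    and ctrb: "controllable n A B"
    and u_dim: "\<forall>i\<in>{1..p}. \<forall>k<T i. u i k \<in> carrier_vec m"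
    and x_dim: "\<forall>i\<in>{1..p}. \<forall>k<T i. x i k \<in> carrier_vec n"
    and traj: "\<forall>i\<in>{1..p}. \<forall>k. k + 1 < T i \<longrightarrow> x i (k + 1) = A *\<^sub>v x i k + B *\<^sub>v u i k"
    and L: "L \<ge> 1"
    and alpha: "\<forall>i\<in>{1..p}. \<alpha> i \<noteq> 0"
    and pbar: "pbar \<le> p"
    and Teq: "\<forall>i\<in>{1..pbar}. T i = T0"
    and pe: "HCPE m (L + n) u T0 T pbar p"
  shows "mrank (hankel_hyb n 1 x 0 (T0 - L) (\<lambda>i. T i - L) \<alpha> pbar p
               @\<^sub>r hankel_hyb m L u 0 (T0 - 1) (\<lambda>i. T i - 1) \<alpha> pbar p) = n + m * L"
proof -
  have T0: "L + n \<le> T0" and TL: "\<forall>i\<in>{Suc pbar..p}. L + n \<le> T i"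
    and rk: "mrank (hankel_hyb m (L + n) u 0 (T0 - 1) (\<lambda>i. T i - 1) \<alpha> pbar p) = m * (L + n)"
    using pe alpha unfolding HCPE_def by auto
  define xb where "xb = (\<lambda>k. vec n (\<lambda>j. \<Sum>i\<in>{1..pbar}. \<alpha> i * x i k $ j))"
  define ub where "ub = (\<lambda>k. vec m (\<lambda>j. \<Sum>i\<in>{1..pbar}. \<alpha> i * u i k $ j))"
  define Xs where "Xs = map (\<lambda>i. \<alpha> i \<cdot>\<^sub>m hankel n 1 (x i) 0 (T i - L)) [Suc pbar..<Suc p]"
  define Us where "Us = map (\<lambda>i. \<alpha> i \<cdot>\<^sub>m hankel m L (u i) 0 (T i - 1)) [Suc pbar..<Suc p]"
  define Hs where "Hs = map (\<lambda>i. \<alpha> i \<cdot>\<^sub>m hankel m (L+n) (u i) 0 (T i - 1)) [Suc pbar..<Suc p]"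
  define Cx where "Cx = hankel n 1 xb 0 (T0 - L)"
  define Cu where "Cu = hankel m L ub 0 (T0 - 1)"
  define Ch where "Ch = hankel m (L + n) ub 0 (T0 - 1)"
  have eqX: "hankel_hyb n 1 x 0 (T0 - L) (\<lambda>i. T i - L) \<alpha> pbar p = hcat n [Cx, hcat n Xs]"
    unfolding hankel_hyb_def hankel_mos_def Xs_def Cx_def xb_def hankel_cum_eq by simp
  have eqU: "hankel_hyb m L u 0 (T0 - 1) (\<lambda>i. T i - 1) \<alpha> pbar p = hcat (m*L) [Cu, hcat (m*L) Us]"
    unfolding hankel_hyb_def hankel_mos_def Us_def Cu_def ub_def hankel_cum_eq by simp
  have eqH: "hankel_hyb m (L + n) u 0 (T0 - 1) (\<lambda>i. T i - 1) \<alpha> pbar p = hcat (m*(L+n)) [Ch, hcat (m*(L+n)) Hs]"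
    unfolding hankel_hyb_def hankel_mos_def Hs_def Ch_def ub_def hankel_cum_eq by simp
  have dims2: "list_all2 (\<lambda>X U. dim_col X = dim_col U) Xs Us"
    unfolding Xs_def Us_def list_all2_map_same
  proof (intro ballI)
    fix i assume "i \<in> set [Suc pbar..<Suc p]"
    hence "L + n \<le> T i" using TL by auto
    thus "dim_col (\<alpha> i \<cdot>\<^sub>m hankel n 1 (x i) 0 (T i - L)) = dim_col (\<alpha> i \<cdot>\<^sub>m hankel m L (u i) 0 (T i - 1))"
      using L by simp
  qed
  have dcC: "dim_col Cx = dim_col Cu" unfolding Cx_def Cu_def using T0 L by simp
  have dims: "list_all2 (\<lambda>X U. dim_col X = dim_col U) [Cx, hcat n Xs] [Cu, hcat (m*L) Us]"
    using dcC hcat_dimcol_eq[OF dims2, of n "m*L"] by simp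
  define S where "S = insert (xb, ub, T0) ((\<lambda>i. (x i, u i, T i)) ` {Suc pbar..p})"
  have trajS: "\<forall>(x,u,T)\<in>S. (\<forall>k<T. x k \<in> carrier_vec n \<and> u k \<in> carrier_vec m) \<and>
                 (\<forall>k. k + 1 < T \<longrightarrow> x (k + 1) = A *\<^sub>v x k + B *\<^sub>v u k)"
  proof -
    have "xb (k + 1) = A *\<^sub>v xb k + B *\<^sub>v ub k" if k: "k + 1 < T0" for k
      unfolding xb_def ub_def
      by (rule lincomb_traj[OF A B], insert u_dim x_dim traj Teq k pbar, auto)
    moreover have "(\<forall>k<T i. x i k \<in> carrier_vec n \<and> u i k \<in> carrier_vec m) \<and>
                 (\<forall>k. k + 1 < T i \<longrightarrow> x i (k + 1) = A *\<^sub>v x i k + B *\<^sub>v u i k)" if i: "i \<in> {Suc pbar..p}" for i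
      using u_dim x_dim traj i by auto
    ultimately show ?thesis unfolding S_def xb_def ub_def by auto
  qed
  show ?thesis unfolding eqX eqU
  proof (rule main_gen[OF A B ctrb L trajS, where Hu = "hcat (m*(L+n)) [Ch, hcat (m*(L+n)) Hs]"
        and cH = "dim_col (hcat (m*(L+n)) [Ch, hcat (m*(L+n)) Hs])" and c = "dim_col (hcat n [Cx, hcat n Xs])"])
    show "hcat (m*(L+n)) [Ch, hcat (m*(L+n)) Hs] \<in> carrier_mat (m*(L+n)) (dim_col (hcat (m*(L+n)) [Ch, hcat (m*(L+n)) Hs]))"
      by (intro carrier_matI) (simp_all del: hcat.simps)
    show "mrank (hcat (m*(L+n)) [Ch, hcat (m*(L+n)) Hs]) = m*(L+n)" using rk eqH by simp
    show "hcat n [Cx, hcat n Xs] \<in> carrier_mat n (dim_col (hcat n [Cx, hcat n Xs]))"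
      by (intro carrier_matI) (simp_all del: hcat.simps)
    show "hcat (m*L) [Cu, hcat (m*L) Us] \<in> carrier_mat (m*L) (dim_col (hcat n [Cx, hcat n Xs]))"
      using hcat_dimcol_eq[OF dims, of n "m*L"] by (intro carrier_matI) (simp_all del: hcat.simps)
  next
    fix w :: "real vec" assume w: "w \<in> carrier_vec (m*(L+n))" and P: "Pp S m (L+n) w"
    have h0: "\<forall>c. c + (L+n) \<le> T0 \<longrightarrow> (\<Sum>r<m*(L+n). w $ r * ub (r div m + c) $ (r mod m)) = 0"
      using P unfolding Pp_def S_def by auto
    have "lkc (m*(L+n)) Ch w" unfolding Ch_def
      by (rule pe_lkc[OF _ _ h0], insert T0 L, auto)
    moreover have "lkc (m*(L+n)) (hcat (m*(L+n)) Hs) w" unfolding lkc_hcat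
    proof
      fix N assume "N \<in> set Hs"
      then obtain i where i0: "i \<in> set [Suc pbar..<Suc p]" and N: "N = \<alpha> i \<cdot>\<^sub>m hankel m (L+n) (u i) 0 (T i - 1)"
        unfolding Hs_def set_map by blast
      have i: "i \<in> {Suc pbar..p}" using i0 by (simp del: upt_Suc)
      have "(x i, u i, T i) \<in> S" using i unfolding S_def by auto
      hence h: "\<forall>c. c + (L+n) \<le> T i \<longrightarrow> (\<Sum>r<m*(L+n). w $ r * u i (r div m + c) $ (r mod m)) = 0"
        using P unfolding Pp_def by auto
      have "lkc (m*(L+n)) (hankel m (L+n) (u i) 0 (T i - 1)) w"
        by (rule pe_lkc[OF _ _ h], insert TL i L, auto)
      thus "lkc (m*(L+n)) N w" unfolding N by (rule lkc_smult, simp)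
    qed
    ultimately show "lkc (m*(L+n)) (hcat (m*(L+n)) [Ch, hcat (m*(L+n)) Hs]) w"
      by (subst lkc_hcat, simp)
  next
    fix v :: "real vec" assume v: "v \<in> carrier_vec (n + m*L)"
      and h: "lk2 n (m*L) (hcat n [Cx, hcat n Xs]) (hcat (m*L) [Cu, hcat (m*L) Us]) v"
    have hh: "lk2 n (m*L) Cx Cu v" "lk2 n (m*L) (hcat n Xs) (hcat (m*L) Us) v"
      using h lk2_hcat[OF dims] by auto
    have all: "list_all2 (\<lambda>X U. lk2 n (m*L) X U v) Xs Us" using hh(2) lk2_hcat[OF dims2] by blast
    have key0: "\<forall>c. c + L \<le> T0 \<longrightarrow> (\<Sum>r<n. v $ r * xb c $ r) + (\<Sum>r<m*L. v $ (n + r) * ub (r div m + c) $ (r mod m)) = 0"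
      using traj_lk[OF L _ hh(1)[unfolded Cx_def Cu_def]] T0 by auto
    have key: "(\<Sum>r<n. v $ r * x i c $ r) + (\<Sum>r<m*L. v $ (n + r) * u i (r div m + c) $ (r mod m)) = 0"
      if i: "Suc pbar \<le> i" "i \<le> p" and c: "c + L \<le> T i" for i c
    proof -
      have "lk2 n (m*L) (\<alpha> i \<cdot>\<^sub>m hankel n 1 (x i) 0 (T i - L)) (\<alpha> i \<cdot>\<^sub>m hankel m L (u i) 0 (T i - 1)) v"
        using all i unfolding Xs_def Us_def list_all2_map_same by auto
      hence "lk2 n (m*L) (hankel n 1 (x i) 0 (T i - L)) (hankel m L (u i) 0 (T i - 1)) v"
      proof (rule lk2_smult)
        have "L + n \<le> T i" using TL i by auto
        thus "dim_col (hankel n 1 (x i) 0 (T i - L)) = dim_col (hankel m L (u i) 0 (T i - 1))" using L by simp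
      qed (insert alpha i, auto)
      from traj_lk[OF L _ this] TL i c
      show ?thesis by auto
    qed
    show "Kp S n m L v" unfolding Kp_def S_def using key0 key by auto
  qed
qed



theorem lemma1:
  fixes n m p pbar L T0 :: nat
    and A B :: "real mat"
    and T :: "nat \<Rightarrow> nat"
    and u x :: "nat \<Rightarrow> nat \<Rightarrow> real vec"
    and \<alpha> :: "nat \<Rightarrow> real"
  assumes A: "A \<in> carrier_mat n n"
    and B: "B \<in> carrier_mat n m"
    and ctrb: "controllable n A B"
    and u_dim: "\<forall>i\<in>{1..p}. \<forall>k<T i. u i k \<in> carrier_vec m"
    and x_dim: "\<forall>i\<in>{1..p}. \<forall>k<T i. x i k \<in> carrier_vec n"
    and traj: "\<forall>i\<in>{1..p}. \<forall>k. k + 1 < T i \<longrightarrow> x i (k + 1) = A *\<^sub>v x i k + B *\<^sub>v u i k"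
    and L: "L \<ge> 1"
    and alpha: "\<forall>i\<in>{1..p}. \<alpha> i \<noteq> 0"
  shows
    "((\<forall>i\<in>{1..p}. T i = T0) \<and> CCPE m (L + n) u T0 p \<longrightarrow>
        mrank (hankel_cum n 1 x 0 (T0 - L) \<alpha> 1 p @\<^sub>r hankel_cum m L u 0 (T0 - 1) \<alpha> 1 p)
          = n + m * L)
   \<and> (MCPE m (L + n) u T p \<longrightarrow>
        mrank (hankel_mos n 1 x 0 (\<lambda>i. T i - L) \<alpha> 1 p @\<^sub>r hankel_mos m L u 0 (\<lambda>i. T i - 1) \<alpha> 1 p)
          = n + m * L)
   \<and> (pbar \<le> p \<and> (\<forall>i\<in>{1..pbar}. T i = T0) \<and> HCPE m (L + n) u T0 T pbar p \<longrightarrow>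
        mrank (hankel_hyb n 1 x 0 (T0 - L) (\<lambda>i. T i - L) \<alpha> pbar p
               @\<^sub>r hankel_hyb m L u 0 (T0 - 1) (\<lambda>i. T i - 1) \<alpha> pbar p)
          = n + m * L)"
  proof (intro conjI impI)
  assume h: "(\<forall>i\<in>{1..p}. T i = T0) \<and> CCPE m (L + n) u T0 p"
  show "mrank (hankel_cum n 1 x 0 (T0 - L) \<alpha> 1 p @\<^sub>r hankel_cum m L u 0 (T0 - 1) \<alpha> 1 p) = n + m * L"
    using part_cum[OF A B ctrb u_dim x_dim traj L alpha] h by blast
next
  assume h: "MCPE m (L + n) u T p"
  show "mrank (hankel_mos n 1 x 0 (\<lambda>i. T i - L) \<alpha> 1 p @\<^sub>r hankel_mos m L u 0 (\<lambda>i. T i - 1) \<alpha> 1 p) = n + m * L"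
    using part_mos[OF A B ctrb u_dim x_dim traj L alpha h] .
next
  assume h: "pbar \<le> p \<and> (\<forall>i\<in>{1..pbar}. T i = T0) \<and> HCPE m (L + n) u T0 T pbar p"
  show "mrank (hankel_hyb n 1 x 0 (T0 - L) (\<lambda>i. T i - L) \<alpha> pbar p
               @\<^sub>r hankel_hyb m L u 0 (T0 - 1) (\<lambda>i. T i - 1) \<alpha> pbar p) = n + m * L"
    using part_hyb[OF A B ctrb u_dim x_dim traj L alpha] h by blast
qed

end
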